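(* Let $(E,\mathsf{E},\mu)$ and $(\Omega,\mathsf{F},\mathbb{P})$ be probability spaces, with $(E,\mathsf{E},\mu)$ complete, and let $X$ be a separable Hadamard space. Let $f:E\times X\to(-\infty,+\infty]$ be a normal convex integrand such that $\underline{f}(x):=\int f(e,x)\,d\mu(e)$ is proper and $\mathrm{argmin}\,\underline{f}\neq\emptyset$. Let $x_0\in X$, let $(\lambda_n)$ be positive reals with $\sum_n\lambda_n=\infty$, $\sum_n\lambda_n^2<\infty$, let $(\xi_{n+1})_{n\in\mathbb{N}}$ be i.i.d.\ random variables $\Omega\to E$ with distribution $\mu$, and let $x_{n+1}:=\mathrm{prox}^f_{\lambda_n}(\xi_{n+1},x_n)$. Assume there is a positive $L\in L^2(E,\mu)$ with $f(e,x)-f(e,y)\le L(e)d(x,y)$ for all $x,y\in X$ and $\mu$-almost all $e$, and set $\underline{L}:=\int L^2\,d\mu$. Let $\mathsf{F}_n:=\sigma(\xi_1,\dots,\xi_n)$ and $\mathbb{E}_n:=\mathbb{E}[\cdot\mid\mathsf{F}_n]$. Then for every $n\in\mathbb{N}$ and every $X$-valued $\mathsf{F}_n$-measurable random variable $y$, \[\mathbb{E}_n[d^2(x_{n+1},y)]\le d^2(x_n,y)-2\lambda_n(\underline{f}(x_n)-\underline{f}(y))+4\lambda_n^2\underline{L}\quad\text{a.s.}\] In particular, if additionally $y\in\mathrm{argmin}\,\underline{f}$ a.s., then $\mathbb{E}_n[d^2(x_{n+1},y)]\le d^2(x_n,y)-2\lambda_n(\underline{f}(x_n)-\min\underline{f})+4\lambda_n^2\underline{L}$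 a.s.
   Context: A Hadamard space is a complete geodesic metric space $(X,d)$ satisfying, for all $x\in X$, $t\in[0,1]$ and geodesics $\gamma:[0,l]\to X$, $d^2(\gamma(tl),x)\le(1-t)d^2(\gamma(0),x)+td^2(\gamma(l),x)-t(1-t)d^2(\gamma(0),\gamma(l))$. A function is convex if its composition with every geodesic is convex. A normal convex integrand is a $\mathsf{E}\otimes\mathsf{B}(X)$-measurable $f:E\times X\to(-\infty,+\infty]$ with each $f(e,\cdot)$ proper, lower semicontinuous and convex. $\mathrm{prox}^f_\lambda(e,x):=\mathrm{argmin}_{y\in X}\{f(e,y)+\frac1{2\lambda}d^2(x,y)\}$. *)

theory Defs
  imports "HOL-Analysis.Analysis" "HOL-Probability.Probability"
begin

definition geodesic :: "(real \<Rightarrow> 'a::metric_space) \<Rightarrow> real \<Rightarrow> bool" where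
  "geodesic \<gamma> l \<longleftrightarrow> 0 \<le> l \<and> (\<forall>s\<in>{0..l}. \<forall>t\<in>{0..l}. dist (\<gamma> s) (\<gamma> t) = \<bar>s - t\<bar>)"

definition hadamard_space :: "'a::metric_space itself \<Rightarrow> bool" where
  "hadamard_space _ \<longleftrightarrow>
     Topological_Spaces.complete (UNIV :: 'a set) \<and>
     (\<forall>x y :: 'a. \<exists>\<gamma>. geodesic \<gamma> (dist x y) \<and> \<gamma> 0 = x \<and> \<gamma> (dist x y) = y) \<and>
     (\<forall>(x::'a) \<gamma> l t. geodesic \<gamma> l \<and> t \<in> {0..1} \<longrightarrow>
        (dist (\<gamma> (t * l)) x)\<^sup>2 \<le> (1 - t) * (dist (\<gamma> 0) x)\<^sup>2 + t * (dist (\<gamma> l) x)\<^sup>2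
                                  - t * (1 - t) * (dist (\<gamma> 0) (\<gamma> l))\<^sup>2)"

definition separable_space :: "'a::topological_space itself \<Rightarrow> bool" where
  "separable_space _ \<longleftrightarrow> (\<exists>D :: 'a set. countable D \<and> closure D = UNIV)"

text \<open>Functions with values in (-\<infinity>,+\<infinity>] are modelled as ereal-valued functions never equal to -\<infinity>.\<close>
definition proper_fun :: "('a \<Rightarrow> ereal) \<Rightarrow> bool" where
  "proper_fun g \<longleftrightarrow> (\<forall>x. g x \<noteq> -\<infinity>) \<and> (\<exists>x. g x \<noteq> \<infinity>)"

definition lsc_fun :: "('a::topological_space \<Rightarrow> ereal) \<Rightarrow> bool" where
  "lsc_fun g \<longleftrightarrow> (\<forall>c. closed {x. g x \<le> c})"

definition geodesically_convex :: "('a::metric_space \<Rightarrow> ereal) \<Rightarrow> bool" where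
  "geodesically_convex g \<longleftrightarrow>
     (\<forall>\<gamma> l. geodesic \<gamma> l \<longrightarrow>
        (\<forall>a\<in>{0..l}. \<forall>b\<in>{0..l}. \<forall>t\<in>{0..1}.
           g (\<gamma> ((1 - t) * a + t * b)) \<le> ereal (1 - t) * g (\<gamma> a) + ereal t * g (\<gamma> b)))"

definition normal_convex_integrand :: "'e measure \<Rightarrow> ('e \<Rightarrow> 'a::metric_space \<Rightarrow> ereal) \<Rightarrow> bool" where
  "normal_convex_integrand M f \<longleftrightarrow>
     (\<lambda>(e, x). f e x) \<in> borel_measurable (M \<Otimes>\<^sub>M (borel :: 'a measure)) \<and>
     (\<forall>e\<in>space M. proper_fun (f e) \<and> lsc_fun (f e) \<and> geodesically_convex (f e))"

text \<open>Integral of an extended-real function, with the convention (+\<infinity>) - (+\<infinity>) = +\<infinity>.\<close>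
definition ext_integral :: "'e measure \<Rightarrow> ('e \<Rightarrow> ereal) \<Rightarrow> ereal" where
  "ext_integral M h =
     (let P = (\<integral>\<^sup>+ e. e2ennreal (h e) \<partial>M);
          N = (\<integral>\<^sup>+ e. e2ennreal (- h e) \<partial>M)
      in if P = \<infinity> then \<infinity> else enn2ereal P - enn2ereal N)"

definition argmin_set :: "('a \<Rightarrow> ereal) \<Rightarrow> 'a set" where
  "argmin_set g = {z. \<forall>y. g z \<le> g y}"

definition prox :: "('e \<Rightarrow> 'a::metric_space \<Rightarrow> ereal) \<Rightarrow> real \<Rightarrow> 'e \<Rightarrow> 'a \<Rightarrow> 'a set" where
  "prox f lam e x = argmin_set (\<lambda>y. f e y + ereal ((dist x y)\<^sup>2 / (2 * lam)))"

definition nat_filtration :: "'w measure \<Rightarrow> 'e measure \<Rightarrow> (nat \<Rightarrow> 'w \<Rightarrow> 'e) \<Rightarrow> nat \<Rightarrow> 'w measure" where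
  "nat_filtration P M \<xi> n =
     sigma (space P) (\<Union>i\<in>{1..n}. {\<xi> i -` A \<inter> space P | A. A \<in> sets M})"

end

theory Submission
  imports Defs
begin

lemma limit_small:
  fixes c l2 :: real
  assumes "l2 \<ge> 0" and "\<And>t. 0 < t \<Longrightarrow> t \<le> 1 \<Longrightarrow> c \<le> t * l2"
  shows "c \<le> 0"
proof (rule ccontr)
  assume "\<not> c \<le> 0"
  hence c: "c > 0" by simp
  have "c \<le> 1 * l2" using assms(2)[of 1] by simp
  hence l2: "l2 > 0" using c by simp
  define t where "t = min 1 (c / (2 * l2))"
  have t: "0 < t" "t \<le> 1" using c l2 by (auto simp: t_def)
  have "c \<le> t * l2" using assms(2) t by simp
  also have "\<dots> \<le> (c / (2 * l2)) * l2" using l2 by (intro mult_right_mono) (auto simp: t_def)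
  also have "\<dots> = c / 2" using l2 by (simp add: field_simps)
  finally show False using c by simp
qed

lemma var_ineq:
  fixes g :: "'x::metric_space \<Rightarrow> ereal"
  assumes H: "hadamard_space TYPE('x)" and cvx: "geodesically_convex g"
    and lam: "lam > 0"
    and pmin: "p \<in> argmin_set (\<lambda>v. g v + ereal ((dist a v)\<^sup>2 / (2*lam)))"
    and gp: "g p = ereal Gp" and gv: "g v = ereal Gv"
  shows "(dist p v)\<^sup>2 \<le> (dist a v)\<^sup>2 - (dist a p)\<^sup>2 - 2*lam*(Gp - Gv)"
proof -
  define l where "l = dist p v"
  obtain \<gamma> where geo: "geodesic \<gamma> l" "\<gamma> 0 = p" "\<gamma> l = v"
    using H unfolding hadamard_space_def l_def by blast
  have l0: "l \<ge> 0" by (simp add: l_def)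
  have dl: "dist (\<gamma> 0) (\<gamma> l) = l"
    using geo(1) l0 unfolding geodesic_def by auto
  have key: "2*lam*Gp + (dist a p)\<^sup>2 - (2*lam*Gv + (dist a v)\<^sup>2) + l\<^sup>2 \<le> t * l\<^sup>2"
    if t: "0 < t" "t \<le> 1" for t
  proof -
    define z where "z = \<gamma> (t * l)"
    have "g (\<gamma> ((1 - t) * 0 + t * l)) \<le> ereal (1 - t) * g (\<gamma> 0) + ereal t * g (\<gamma> l)"
    proof -
      have "\<forall>a\<in>{0..l}. \<forall>b\<in>{0..l}. \<forall>t\<in>{0..1}. g (\<gamma> ((1 - t) * a + t * b)) \<le> ereal (1 - t) * g (\<gamma> a) + ereal t * g (\<gamma> b)"
        using cvx geo(1) unfolding geodesically_convex_def by blast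
      from bspec[OF bspec[OF bspec[OF this, of 0], of l], of t]
      show ?thesis using t l0 by simp
    qed
    hence conv: "g z \<le> ereal ((1 - t) * Gp + t * Gv)"
      using geo gp gv by (simp add: z_def)
    have "g p + ereal ((dist a p)\<^sup>2 / (2*lam)) \<le> g z + ereal ((dist a z)\<^sup>2 / (2*lam))"
      using pmin unfolding argmin_set_def by blast
    hence minim: "ereal (Gp + (dist a p)\<^sup>2 / (2*lam)) \<le> g z + ereal ((dist a z)\<^sup>2 / (2*lam))"
      using gp by simp
    have fin: "\<bar>g z\<bar> \<noteq> \<infinity>"
      using conv minim by (cases "g z") auto
    then obtain Gz where Gz: "g z = ereal Gz" by (cases "g z") auto
    have conv': "Gz \<le> (1 - t) * Gp + t * Gv" using conv Gz by simp
    have minim': "Gp + (dist a p)\<^sup>2 / (2*lam) \<le> Gz + (dist a z)\<^sup>2 / (2*lam)"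
      using minim Gz by simp
    have cat: "(dist z a)\<^sup>2 \<le> (1 - t) * (dist p a)\<^sup>2 + t * (dist v a)\<^sup>2 - t * (1 - t) * l\<^sup>2"
      using H geo(1) t dl geo(2,3) unfolding hadamard_space_def z_def
      by (metis atLeastAtMost_iff less_eq_real_def)
    have "2*lam*(Gp + (dist a p)\<^sup>2 / (2*lam)) \<le> 2*lam*(Gz + (dist a z)\<^sup>2 / (2*lam))"
      using minim' lam by (intro mult_left_mono) auto
    hence m2: "2*lam*Gp + (dist a p)\<^sup>2 \<le> 2*lam*Gz + (dist a z)\<^sup>2"
      using lam by (simp add: distrib_left)
    have "2*lam*Gp + (dist a p)\<^sup>2 \<le> 2*lam*((1 - t) * Gp + t * Gv) + ((1 - t) * (dist a p)\<^sup>2 + t * (dist a v)\<^sup>2 - t * (1 - t) * l\<^sup>2)"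
      using m2 conv' cat lam by (smt (verit, best) dist_commute mult_left_mono)
    hence "t * (2*lam*Gp + (dist a p)\<^sup>2) \<le> t * (2*lam*Gv + (dist a v)\<^sup>2 - (1 - t) * l\<^sup>2)"
      by (simp add: algebra_simps)
    hence "2*lam*Gp + (dist a p)\<^sup>2 \<le> 2*lam*Gv + (dist a v)\<^sup>2 - (1 - t) * l\<^sup>2"
      using t by simp
    thus ?thesis by (simp add: algebra_simps)
  qed
  have "2*lam*Gp + (dist a p)\<^sup>2 - (2*lam*Gv + (dist a v)\<^sup>2) + l\<^sup>2 \<le> 0"
    by (rule limit_small[OF _ key]) auto
  thus ?thesis by (simp add: l_def algebra_simps)
qed

lemma prox_finite:
  fixes g :: "'x::metric_space \<Rightarrow> ereal"
  assumes pr: "proper_fun g"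
    and pmin: "p \<in> argmin_set (\<lambda>v. g v + ereal ((dist a v)\<^sup>2 / (2*lam)))"
  shows "g p = ereal (real_of_ereal (g p))"
proof -
  obtain x0 where x0: "g x0 \<noteq> \<infinity>" using pr unfolding proper_fun_def by blast
  have "g p + ereal ((dist a p)\<^sup>2 / (2*lam)) \<le> g x0 + ereal ((dist a x0)\<^sup>2 / (2*lam))"
    using pmin unfolding argmin_set_def by blast
  hence "g p \<noteq> \<infinity>" using x0 by auto
  moreover have "g p \<noteq> -\<infinity>" using pr unfolding proper_fun_def by blast
  ultimately show ?thesis by (cases "g p") auto
qed

lemma strong_conv:
  fixes g :: "'x::metric_space \<Rightarrow> ereal"
  assumes H: "hadamard_space TYPE('x)" and cvx: "geodesically_convex g" and pr: "proper_fun g"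
    and lam: "lam > 0"
    and pmin: "p \<in> argmin_set (\<lambda>v. g v + ereal ((dist a v)\<^sup>2 / (2*lam)))"
  shows "ereal (real_of_ereal (g p) + (dist a p)\<^sup>2 / (2*lam) + (dist p v)\<^sup>2 / (2*lam))
           \<le> g v + ereal ((dist a v)\<^sup>2 / (2*lam))"
proof (cases "g v = \<infinity>")
  case True thus ?thesis by simp
next
  case False
  have "g v \<noteq> -\<infinity>" using pr unfolding proper_fun_def by blast
  with False obtain Gv where gv: "g v = ereal Gv" by (cases "g v") auto
  have gp: "g p = ereal (real_of_ereal (g p))" by (rule prox_finite[OF pr pmin])
  have vi: "(dist p v)\<^sup>2 \<le> (dist a v)\<^sup>2 - (dist a p)\<^sup>2 - 2*lam*(real_of_ereal (g p) - Gv)"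
    by (rule var_ineq[OF H cvx lam pmin gp gv])
  have "real_of_ereal (g p) + (dist a p)\<^sup>2 / (2*lam) + (dist p v)\<^sup>2 / (2*lam) \<le> Gv + (dist a v)\<^sup>2 / (2*lam)"
  proof -
    have "((dist a p)\<^sup>2 + (dist p v)\<^sup>2) / (2*lam) \<le> ((dist a v)\<^sup>2 - 2*lam*(real_of_ereal (g p) - Gv)) / (2*lam)"
      using vi lam by (intro divide_right_mono) auto
    also have "\<dots> = (dist a v)\<^sup>2 / (2*lam) - (real_of_ereal (g p) - Gv)"
      using lam by (simp add: field_simps)
    finally show ?thesis by (simp add: add_divide_distrib)
  qed
  thus ?thesis using gv by simp
qed

lemma good_pointwise:
  fixes g :: "'x::metric_space \<Rightarrow> ereal"
  assumes H: "hadamard_space TYPE('x)" and cvx: "geodesically_convex g" and pr: "proper_fun g"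
    and lam: "lam > 0"
    and pmin: "p \<in> argmin_set (\<lambda>v. g v + ereal ((dist a v)\<^sup>2 / (2*lam)))"
    and lip: "\<forall>u v. g u - g v \<le> ereal (K * dist u v)"
  shows "(dist p b)\<^sup>2 \<le> (dist a b)\<^sup>2 - 2*lam*(real_of_ereal (g a) - real_of_ereal (g b)) + 4 * lam\<^sup>2 * K\<^sup>2"
proof -
  have fin: "g u = ereal (real_of_ereal (g u))" for u
  proof -
    obtain x0 where x0: "g x0 \<noteq> \<infinity>" using pr unfolding proper_fun_def by blast
    have "g u - g x0 \<le> ereal (K * dist u x0)" using lip by blast
    moreover have "g x0 \<noteq> -\<infinity>" "g u \<noteq> -\<infinity>" using pr unfolding proper_fun_def by auto
    ultimately have "g u \<noteq> \<infinity>" using x0 by (cases "g x0") auto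
    thus ?thesis using \<open>g u \<noteq> -\<infinity>\<close> by (cases "g u") auto
  qed
  define G where "G u = real_of_ereal (g u)" for u
  have vi: "(dist p b)\<^sup>2 \<le> (dist a b)\<^sup>2 - (dist a p)\<^sup>2 - 2*lam*(G p - G b)"
    by (rule var_ineq[OF H cvx lam pmin]) (auto simp: G_def intro: fin)
  have "g a - g p \<le> ereal (K * dist a p)" using lip by blast
  hence la: "G a - G p \<le> K * dist a p"
    using fin[of a] fin[of p] by (simp add: G_def) (metis ereal_minus(1) ereal_less_eq(3))
  have "2*lam*(G a - G p) \<le> 2*lam*(K*dist a p)"
    using la lam by (intro mult_left_mono) auto
  hence "2*lam*(G a - G p) - (dist a p)\<^sup>2 \<le> 2*lam*K*dist a p - (dist a p)\<^sup>2"
    by (simp add: mult.assoc)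
  also have "\<dots> \<le> lam\<^sup>2 * K\<^sup>2"
  proof -
    have e: "(lam*K - dist a p)\<^sup>2 = lam\<^sup>2*K\<^sup>2 - 2*lam*K*dist a p + (dist a p)\<^sup>2"
      by (simp add: power2_diff power_mult_distrib)
    have "0 \<le> (lam*K - dist a p)\<^sup>2" by simp
    thus ?thesis using e by linarith
  qed
  also have "\<dots> \<le> 4 * lam\<^sup>2 * K\<^sup>2" by simp
  finally have "2*lam*(G a - G p) - (dist a p)\<^sup>2 \<le> 4 * lam\<^sup>2 * K\<^sup>2" .
  with vi show ?thesis by (simp add: G_def[symmetric] algebra_simps)
qed

lemma sq_diff_le:
  fixes x y d :: real
  assumes "0 \<le> x" "0 \<le> y" "x - y \<le> d"
  shows "x\<^sup>2 - y\<^sup>2 \<le> d * (x + y)"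
proof -
  have "x\<^sup>2 - y\<^sup>2 = (x - y) * (x + y)" by (simp add: power2_eq_square algebra_simps)
  also have "\<dots> \<le> d * (x + y)" using assms by (intro mult_right_mono) auto
  finally show ?thesis .
qed

lemma prox_cont:
  fixes g :: "'x::metric_space \<Rightarrow> ereal"
  assumes H: "hadamard_space TYPE('x)" and cvx: "geodesically_convex g" and pr: "proper_fun g"
    and lam: "lam > 0"
    and p1: "p1 \<in> argmin_set (\<lambda>v. g v + ereal ((dist a1 v)\<^sup>2 / (2*lam)))"
    and eps: "\<epsilon> > 0"
  shows "\<exists>\<eta>>0. \<forall>a2 p2. p2 \<in> argmin_set (\<lambda>v. g v + ereal ((dist a2 v)\<^sup>2 / (2*lam))) \<and> dist a1 a2 < \<eta>
            \<longrightarrow> dist p1 p2 < \<epsilon>"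
proof -
  define c where "c = dist a1 p1"
  have c0: "c \<ge> 0" by (simp add: c_def)
  define \<eta> where "\<eta> = min 1 (min (\<epsilon>/2) (\<epsilon>\<^sup>2 / (2*(2*c+1))))"
  have \<eta>: "\<eta> > 0" using eps c0 by (auto simp: \<eta>_def)
  show ?thesis
  proof (intro exI[of _ \<eta>] conjI allI impI \<eta>)
    fix a2 p2
    assume as: "p2 \<in> argmin_set (\<lambda>v. g v + ereal ((dist a2 v)\<^sup>2 / (2*lam))) \<and> dist a1 a2 < \<eta>"
    hence p2: "p2 \<in> argmin_set (\<lambda>v. g v + ereal ((dist a2 v)\<^sup>2 / (2*lam)))" by blast
    define \<delta> where "\<delta> = dist a1 a2"
    have \<delta>: "\<delta> < \<eta>" "\<delta> \<ge> 0" using as by (auto simp: \<delta>_def)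
    define D where "D = dist p1 p2"
    have g1: "g p1 = ereal (real_of_ereal (g p1))" by (rule prox_finite[OF pr p1])
    have g2: "g p2 = ereal (real_of_ereal (g p2))" by (rule prox_finite[OF pr p2])
    have v1: "D\<^sup>2 \<le> (dist a1 p2)\<^sup>2 - (dist a1 p1)\<^sup>2 - 2*lam*(real_of_ereal (g p1) - real_of_ereal (g p2))"
      unfolding D_def by (rule var_ineq[OF H cvx lam p1 g1 g2])
    have v2: "D\<^sup>2 \<le> (dist a2 p1)\<^sup>2 - (dist a2 p2)\<^sup>2 - 2*lam*(real_of_ereal (g p2) - real_of_ereal (g p1))"
      unfolding D_def by (subst dist_commute, rule var_ineq[OF H cvx lam p2 g2 g1])
    have s1: "(dist a1 p2)\<^sup>2 - (dist a2 p2)\<^sup>2 \<le> \<delta> * (dist a1 p2 + dist a2 p2)"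
    proof -
      have "dist a1 p2 \<le> dist a1 a2 + dist a2 p2" by (rule dist_triangle)
      thus ?thesis by (intro sq_diff_le) (auto simp: \<delta>_def)
    qed
    have s2: "(dist a2 p1)\<^sup>2 - (dist a1 p1)\<^sup>2 \<le> \<delta> * (dist a2 p1 + dist a1 p1)"
    proof -
      have "dist a2 p1 \<le> dist a2 a1 + dist a1 p1" by (rule dist_triangle)
      thus ?thesis by (intro sq_diff_le) (auto simp: \<delta>_def dist_commute)
    qed
    have t1: "dist a1 p2 \<le> c + D" by (simp add: c_def D_def dist_triangle)
    have t2: "dist a2 p2 \<le> \<delta> + c + D"
      using dist_triangle[of a2 p2 a1] t1 by (simp add: \<delta>_def dist_commute)
    have t3: "dist a2 p1 \<le> \<delta> + c"
      using dist_triangle[of a2 p1 a1] by (simp add: \<delta>_def c_def dist_commute)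
    have "2 * D\<^sup>2 \<le> \<delta> * (dist a1 p2 + dist a2 p2) + \<delta> * (dist a2 p1 + dist a1 p1)"
    proof -
      have "2*lam*(real_of_ereal (g p1) - real_of_ereal (g p2)) + 2*lam*(real_of_ereal (g p2) - real_of_ereal (g p1)) = 0"
        by (simp add: algebra_simps)
      thus ?thesis using v1 v2 s1 s2 by linarith
    qed
    also have "\<dots> = \<delta> * (dist a1 p2 + dist a2 p2 + dist a2 p1 + dist a1 p1)"
      by (simp add: algebra_simps)
    also have "\<dots> \<le> \<delta> * (4*c + 2*D + 2*\<delta>)"
      using t1 t2 t3 \<delta> by (intro mult_left_mono) (auto simp: c_def)
    finally have main: "D\<^sup>2 \<le> \<delta> * (2*c + D + \<delta>)" by (simp add: algebra_simps)
    show "dist p1 p2 < \<epsilon>"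
    proof (rule ccontr)
      assume "\<not> dist p1 p2 < \<epsilon>"
      hence De: "D \<ge> \<epsilon>" by (simp add: D_def)
      have d1: "\<delta> \<le> 1" "\<delta> \<le> \<epsilon>/2" "\<delta> < \<epsilon>\<^sup>2 / (2*(2*c+1))"
        using \<delta> by (auto simp: \<eta>_def)
      have "\<delta> * (2*c + D + \<delta>) \<le> \<delta> * (2*c + 1) + \<delta> * D"
        using d1 \<delta> by (simp add: algebra_simps mult_left_le)
      hence "D * (D - \<delta>) \<le> \<delta> * (2*c + 1)" using main by (simp add: power2_eq_square algebra_simps)
      moreover have "\<epsilon> * (\<epsilon>/2) \<le> D * (D - \<delta>)"
        using De d1 eps by (intro mult_mono) auto
      moreover have "\<delta> * (2*c + 1) < \<epsilon>\<^sup>2 / 2"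
        using d1 c0 by (simp add: field_simps)
      ultimately show False by (simp add: power2_eq_square)
    qed
  qed
qed

lemma dense_pt:
  fixes D :: "'x::metric_space set"
  assumes "closure D = UNIV" "e > 0"
  shows "\<exists>q\<in>D. dist x q < e"
  using closure_approachableD[of x D e] assms by auto

lemma meas_by_balls:
  fixes h :: "'w \<Rightarrow> 'x::metric_space" and D :: "'x set"
  assumes D: "countable D" "closure D = UNIV"
    and B: "\<And>z r. r > 0 \<Longrightarrow> h -` ball z r \<inter> space Q \<in> sets Q"
  shows "h \<in> borel_measurable Q"
proof (rule borel_measurableI)
  fix S :: "'x set" assume S: "open S"
  define I where "I = {(q, r). q \<in> D \<and> r \<in> \<rat> \<and> r > 0 \<and> ball q r \<subseteq> S}"
  have cI: "countable I"
    by (rule countable_subset[of _ "D \<times> \<rat>"]) (auto simp: I_def D(1) countable_rat)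
  have eq: "S = (\<Union>(q, r)\<in>I. ball q r)"
  proof
    show "S \<subseteq> (\<Union>(q, r)\<in>I. ball q r)"
    proof
      fix x assume "x \<in> S"
      then obtain e where e: "e > 0" "ball x e \<subseteq> S" using S open_contains_ball by blast
      obtain q where q: "q \<in> D" "dist x q < e/2" using dense_pt[OF D(2), of "e/2" x] e by auto
      obtain r where r: "r \<in> \<rat>" "dist x q < r" "r < e/2" using Rats_dense_in_real[OF q(2)] by auto
      have "ball q r \<subseteq> ball x e"
      proof
        fix y assume "y \<in> ball q r"
        hence "dist q y < r" by simp
        moreover have "dist x y \<le> dist x q + dist q y" by (rule dist_triangle)
        ultimately show "y \<in> ball x e" using r by simp
      qed
      hence "(q, r) \<in> I" using q r e by (auto simp: I_def intro: order_le_less_trans[OF zero_le_dist])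
      moreover have "x \<in> ball q r" using r by (simp add: dist_commute)
      ultimately show "x \<in> (\<Union>(q, r)\<in>I. ball q r)" by blast
    qed
  qed (auto simp: I_def)
  have "h -` S \<inter> space Q = (\<Union>(q, r)\<in>I. h -` ball q r \<inter> space Q)"
    by (subst eq) auto
  also have "\<dots> \<in> sets Q"
    by (intro sets.countable_UN'' cI) (auto simp: I_def intro: B)
  finally show "h -` S \<inter> space Q \<in> sets Q" .
qed

lemma meas_dist_pt:
  fixes a :: "'w \<Rightarrow> 'x::metric_space"
  assumes "a \<in> borel_measurable Q"
  shows "(\<lambda>\<omega>. dist (a \<omega>) q) \<in> borel_measurable Q"
  by (rule borel_measurable_continuous_on[OF _ assms]) (intro continuous_intros)

lemma meas_dist:
  fixes a b :: "'w \<Rightarrow> 'x::metric_space" and D :: "'x set"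
  assumes D: "countable D" "closure D = UNIV"
    and a: "a \<in> borel_measurable Q" and b: "b \<in> borel_measurable Q"
  shows "(\<lambda>\<omega>. dist (a \<omega>) (b \<omega>)) \<in> borel_measurable Q"
proof -
  have eq: "ereal (dist u v) = (INF q\<in>D. ereal (dist u q + dist q v))" for u v :: 'x
  proof (rule antisym)
    show "ereal (dist u v) \<le> (INF q\<in>D. ereal (dist u q + dist q v))"
      by (rule INF_greatest) (simp add: dist_triangle)
    show "(INF q\<in>D. ereal (dist u q + dist q v)) \<le> ereal (dist u v)"
    proof (rule ereal_le_epsilon2)
      fix e :: real assume e: "e > 0"
      obtain q where q: "q \<in> D" "dist u q < e/2" using dense_pt[OF D(2), of "e/2" u] e by auto
      have "dist q v \<le> dist q u + dist u v" by (rule dist_triangle)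
      hence "dist u q + dist q v \<le> dist u v + e" using q by (simp add: dist_commute)
      hence "(INF q\<in>D. ereal (dist u q + dist q v)) \<le> ereal (dist u v + e)"
        using q(1) by (meson INF_lower2 ereal_less_eq(3))
      thus "(INF q\<in>D. ereal (dist u q + dist q v)) \<le> ereal (dist u v) + ereal e" by simp
    qed
  qed
  have m: "(\<lambda>\<omega>. INF q\<in>D. ereal (dist (a \<omega>) q + dist q (b \<omega>))) \<in> borel_measurable Q"
  proof (intro borel_measurable_INF D(1))
    fix q assume "q \<in> D"
    have [measurable]: "(\<lambda>\<omega>. dist (a \<omega>) q) \<in> borel_measurable Q" "(\<lambda>\<omega>. dist (b \<omega>) q) \<in> borel_measurable Q"
      using meas_dist_pt[OF a] meas_dist_pt[OF b] by auto
    show "(\<lambda>\<omega>. ereal (dist (a \<omega>) q + dist q (b \<omega>))) \<in> borel_measurable Q"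
      by (simp add: dist_commute[of q])
  qed
  have "(\<lambda>\<omega>. real_of_ereal (INF q\<in>D. ereal (dist (a \<omega>) q + dist q (b \<omega>)))) \<in> borel_measurable Q"
    using m by measurable
  thus ?thesis by (simp add: eq[symmetric])
qed

lemma lip_fin:
  fixes g :: "'x::metric_space \<Rightarrow> ereal"
  assumes pr: "proper_fun g" and lip: "\<forall>u v. g u - g v \<le> ereal (K * dist u v)"
  shows "g u = ereal (real_of_ereal (g u))"
proof -
  obtain x0 where x0: "g x0 \<noteq> \<infinity>" using pr unfolding proper_fun_def by blast
  have "g u - g x0 \<le> ereal (K * dist u x0)" using lip by blast
  moreover have "g x0 \<noteq> -\<infinity>" "g u \<noteq> -\<infinity>" using pr unfolding proper_fun_def by auto
  ultimately have "g u \<noteq> \<infinity>" using x0 by (cases "g x0") auto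
  thus ?thesis using \<open>g u \<noteq> -\<infinity>\<close> by (cases "g u") auto
qed

lemma lip_real:
  fixes g :: "'x::metric_space \<Rightarrow> ereal"
  assumes pr: "proper_fun g" and lip: "\<forall>u v. g u - g v \<le> ereal (K * dist u v)"
  shows "real_of_ereal (g u) - real_of_ereal (g v) \<le> K * dist u v"
proof -
  have "g u - g v \<le> ereal (K * dist u v)" using lip by blast
  thus ?thesis using lip_fin[OF pr lip, of u] lip_fin[OF pr lip, of v]
    by (metis ereal_minus(1) ereal_less_eq(3))
qed

lemma lip_cont:
  fixes g :: "'x::metric_space \<Rightarrow> ereal"
  assumes pr: "proper_fun g" and lip: "\<forall>u v. g u - g v \<le> ereal (K * dist u v)" and K: "K \<ge> 0"
  shows "continuous_on UNIV (\<lambda>v. real_of_ereal (g v))"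
proof (rule lipschitz_on_continuous_on)
  show "K-lipschitz_on UNIV (\<lambda>v. real_of_ereal (g v))"
    unfolding lipschitz_on_def
  proof (intro conjI K ballI)
    fix u v :: 'x
    have "real_of_ereal (g u) - real_of_ereal (g v) \<le> K * dist u v" by (rule lip_real[OF pr lip])
    moreover have "real_of_ereal (g v) - real_of_ereal (g u) \<le> K * dist v u" by (rule lip_real[OF pr lip])
    ultimately show "dist (real_of_ereal (g u)) (real_of_ereal (g v)) \<le> K * dist u v"
      by (simp add: dist_real_def dist_commute abs_le_iff)
  qed
qed

lemma inf_dense_le:
  fixes \<psi> :: "'x::metric_space \<Rightarrow> real"
  assumes c: "continuous_on UNIV \<psi>" and U: "open U" "p \<in> U" and D: "closure D = UNIV"
  shows "(INF q\<in>D \<inter> U. ereal (\<psi> q)) \<le> ereal (\<psi> p)"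
proof (rule ereal_le_epsilon2)
  fix e :: real assume e: "e > 0"
  obtain \<eta> where \<eta>: "\<eta> > 0" "\<forall>y. dist y p < \<eta> \<longrightarrow> dist (\<psi> y) (\<psi> p) < e"
    using c e unfolding continuous_on_iff by blast
  obtain \<eta>' where \<eta>': "\<eta>' > 0" "ball p \<eta>' \<subseteq> U" using U open_contains_ball by blast
  obtain q where q: "q \<in> D" "dist p q < min \<eta> \<eta>'" using dense_pt[OF D, of "min \<eta> \<eta>'" p] \<eta> \<eta>' by auto
  have qU: "q \<in> U" using q \<eta>' by auto
  have "dist q p < \<eta>" using q by (simp add: dist_commute)
  hence "dist (\<psi> q) (\<psi> p) < e" using \<eta> by blast
  hence "\<psi> q \<le> \<psi> p + e" by (simp add: dist_real_def)
  hence "(INF q\<in>D \<inter> U. ereal (\<psi> q)) \<le> ereal (\<psi> p + e)"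
    using q(1) qU by (meson INF_lower2 IntI ereal_less_eq(3))
  thus "(INF q\<in>D \<inter> U. ereal (\<psi> q)) \<le> ereal (\<psi> p) + ereal e" by simp
qed

lemma S_part:
  fixes Q :: "'w measure" and M :: "'e measure" and f :: "'e \<Rightarrow> 'x::metric_space \<Rightarrow> ereal"
    and D :: "'x set"
  assumes H: "hadamard_space TYPE('x)" and D: "countable D" "closure D = UNIV" and lam: "lam > 0"
    and nci: "\<And>e. e \<in> space M \<Longrightarrow> proper_fun (f e) \<and> geodesically_convex (f e)"
    and N_sub: "\<And>A. A \<subseteq> N \<Longrightarrow> A \<in> sets M"
    and xi: "xi \<in> measurable Q M" and xa: "xa \<in> borel_measurable Q"
    and xb: "\<And>\<omega>. \<omega> \<in> space Q \<Longrightarrow> xb \<omega> \<in> prox f lam (xi \<omega>) (xa \<omega>)"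
  shows "{\<omega>\<in>space Q. xi \<omega> \<in> N \<and> xb \<omega> \<in> ball z r} \<in> sets Q"
proof -
  define E where "E q \<delta> = {e \<in> N. \<forall>\<omega>'\<in>space Q. xi \<omega>' = e \<and> dist (xa \<omega>') q < \<delta> \<longrightarrow> xb \<omega>' \<in> ball z r}"
    for q \<delta>
  define I where "I = D \<times> {\<delta>::real. \<delta>\<in>\<rat> \<and> \<delta> > 0}"
  have cI: "countable I" unfolding I_def using D(1) countable_rat
    by (intro countable_SIGMA) (auto intro: countable_subset[of _ \<rat>])
  have eq: "{\<omega>\<in>space Q. xi \<omega> \<in> N \<and> xb \<omega> \<in> ball z r}
      = (\<Union>(q, \<delta>)\<in>I. {\<omega>\<in>space Q. dist (xa \<omega>) q < \<delta>} \<inter> (xi -` E q \<delta> \<inter> space Q))"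
  proof
    show "{\<omega>\<in>space Q. xi \<omega> \<in> N \<and> xb \<omega> \<in> ball z r}
      \<subseteq> (\<Union>(q, \<delta>)\<in>I. {\<omega>\<in>space Q. dist (xa \<omega>) q < \<delta>} \<inter> (xi -` E q \<delta> \<inter> space Q))"
    proof
      fix \<omega> assume \<omega>: "\<omega> \<in> {\<omega>\<in>space Q. xi \<omega> \<in> N \<and> xb \<omega> \<in> ball z r}"
      define e where "e = xi \<omega>"
      have eM: "e \<in> space M" using \<omega> measurable_space[OF xi] unfolding e_def by blast
      have p1: "xb \<omega> \<in> argmin_set (\<lambda>v. f e v + ereal ((dist (xa \<omega>) v)\<^sup>2 / (2*lam)))"
        using xb \<omega> unfolding prox_def e_def by auto
      define \<epsilon> where "\<epsilon> = r - dist z (xb \<omega>)"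
      have \<epsilon>: "\<epsilon> > 0" using \<omega> by (simp add: \<epsilon>_def)
      obtain \<eta> where \<eta>: "\<eta> > 0" "\<forall>a2 p2. p2 \<in> argmin_set (\<lambda>v. f e v + ereal ((dist a2 v)\<^sup>2 / (2*lam))) \<and> dist (xa \<omega>) a2 < \<eta>
            \<longrightarrow> dist (xb \<omega>) p2 < \<epsilon>"
      proof -
        have pe: "proper_fun (f e)" "geodesically_convex (f e)" using nci[OF eM] by auto
        show ?thesis using prox_cont[OF H pe(2) pe(1) lam p1 \<epsilon>] that by blast
      qed
      obtain \<delta> where \<delta>: "\<delta> \<in> \<rat>" "0 < \<delta>" "\<delta> < \<eta>/2" using Rats_dense_in_real[of 0 "\<eta>/2"] \<eta> by auto
      obtain q where q: "q \<in> D" "dist (xa \<omega>) q < \<delta>" using dense_pt[OF D(2), of \<delta> "xa \<omega>"] \<delta> by auto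
      have "e \<in> E q \<delta>"
        unfolding E_def
      proof (intro CollectI conjI ballI impI)
        show "e \<in> N" using \<omega> by (simp add: e_def)
        fix \<omega>' assume \<omega>': "\<omega>' \<in> space Q" "xi \<omega>' = e \<and> dist (xa \<omega>') q < \<delta>"
        have "dist (xa \<omega>) (xa \<omega>') \<le> dist (xa \<omega>) q + dist q (xa \<omega>')" by (rule dist_triangle)
        moreover have "dist q (xa \<omega>') < \<delta>" using \<omega>' by (simp add: dist_commute)
        ultimately have d: "dist (xa \<omega>) (xa \<omega>') < \<eta>" using q(2) \<delta>(3) by linarith
        have p2: "xb \<omega>' \<in> argmin_set (\<lambda>v. f e v + ereal ((dist (xa \<omega>') v)\<^sup>2 / (2*lam)))"
          using xb[OF \<omega>'(1)] \<omega>'(2) unfolding prox_def by auto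
        have "dist (xb \<omega>) (xb \<omega>') < \<epsilon>" using \<eta>(2) p2 d by blast
        moreover have "dist z (xb \<omega>') \<le> dist z (xb \<omega>) + dist (xb \<omega>) (xb \<omega>')" by (rule dist_triangle)
        ultimately show "xb \<omega>' \<in> ball z r" by (simp add: \<epsilon>_def)
      qed
      thus "\<omega> \<in> (\<Union>(q, \<delta>)\<in>I. {\<omega>\<in>space Q. dist (xa \<omega>) q < \<delta>} \<inter> (xi -` E q \<delta> \<inter> space Q))"
      proof -
        have "(q, \<delta>) \<in> I" using q \<delta> unfolding I_def by blast
        moreover have "\<omega> \<in> {\<omega>\<in>space Q. dist (xa \<omega>) q < \<delta>} \<inter> (xi -` E q \<delta> \<inter> space Q)"
          using q \<omega> \<open>e \<in> E q \<delta>\<close> unfolding e_def by blast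
        ultimately show ?thesis by blast
      qed
    qed
  next
    show "(\<Union>(q, \<delta>)\<in>I. {\<omega>\<in>space Q. dist (xa \<omega>) q < \<delta>} \<inter> (xi -` E q \<delta> \<inter> space Q))
      \<subseteq> {\<omega>\<in>space Q. xi \<omega> \<in> N \<and> xb \<omega> \<in> ball z r}"
    proof (intro subsetI)
      fix \<omega> assume "\<omega> \<in> (\<Union>(q, \<delta>)\<in>I. {\<omega>\<in>space Q. dist (xa \<omega>) q < \<delta>} \<inter> (xi -` E q \<delta> \<inter> space Q))"
      then obtain q \<delta> where "\<omega> \<in> space Q" "dist (xa \<omega>) q < \<delta>" "xi \<omega> \<in> E q \<delta>" by blast
      thus "\<omega> \<in> {\<omega>\<in>space Q. xi \<omega> \<in> N \<and> xb \<omega> \<in> ball z r}" unfolding E_def by auto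
    qed
  qed
  have "(\<Union>(q, \<delta>)\<in>I. {\<omega>\<in>space Q. dist (xa \<omega>) q < \<delta>} \<inter> (xi -` E q \<delta> \<inter> space Q)) \<in> sets Q"
  proof (intro sets.countable_UN'' cI)
    fix x assume "x \<in> I"
    then obtain q \<delta> where x: "x = (q, \<delta>)" by (cases x) auto
    have [measurable]: "(\<lambda>\<omega>. dist (xa \<omega>) q) \<in> borel_measurable Q" by (rule meas_dist_pt[OF xa])
    have "{\<omega>\<in>space Q. dist (xa \<omega>) q < \<delta>} \<in> sets Q" by measurable
    moreover have "xi -` E q \<delta> \<inter> space Q \<in> sets Q"
      by (rule measurable_sets[OF xi N_sub]) (auto simp: E_def)
    ultimately show "(case x of (q, \<delta>) \<Rightarrow> {\<omega>\<in>space Q. dist (xa \<omega>) q < \<delta>} \<inter> (xi -` E q \<delta> \<inter> space Q)) \<in> sets Q"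
      by (auto simp: x)
  qed
  thus ?thesis using eq by simp
qed

lemma T_part:
  fixes Q :: "'w measure" and M :: "'e measure" and f :: "'e \<Rightarrow> 'x::metric_space \<Rightarrow> ereal"
    and D :: "'x set"
  assumes H: "hadamard_space TYPE('x)" and D: "countable D" "closure D = UNIV" and lam: "lam > 0"
    and nci: "\<And>e. e \<in> space M \<Longrightarrow> proper_fun (f e) \<and> geodesically_convex (f e)"
    and fmeas: "(\<lambda>(e, x). f e x) \<in> borel_measurable (M \<Otimes>\<^sub>M borel)"
    and N: "N \<in> sets M"
    and good: "\<And>e. e \<in> space M - N \<Longrightarrow> (\<forall>u v. f e u - f e v \<le> ereal (L e * dist u v)) \<and> L e \<ge> 0"
    and xi: "xi \<in> measurable Q M" and xa: "xa \<in> borel_measurable Q"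
    and xb: "\<And>\<omega>. \<omega> \<in> space Q \<Longrightarrow> xb \<omega> \<in> prox f lam (xi \<omega>) (xa \<omega>)"
  shows "{\<omega>\<in>space Q. xi \<omega> \<notin> N \<and> xb \<omega> \<in> ball z r} \<in> sets Q"
proof -
  define \<phi> where "\<phi> \<omega> v = f (xi \<omega>) v + ereal ((dist (xa \<omega>) v)\<^sup>2 / (2*lam))" for \<omega> v
  define mi where "mi \<omega> s = (INF q\<in>D \<inter> ball z s. \<phi> \<omega> q)" for \<omega> s
  define mo where "mo \<omega> s = (INF q\<in>D \<inter> (- cball z s). \<phi> \<omega> q)" for \<omega> s
  have equiv: "xb \<omega> \<in> ball z r \<longleftrightarrow> (\<exists>s\<in>{s. s \<in> \<rat> \<and> 0 < s \<and> s < r}. mi \<omega> s < mo \<omega> s)"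
    if \<omega>: "\<omega> \<in> space Q" "xi \<omega> \<notin> N" for \<omega>
  proof -
    define e where "e = xi \<omega>"
    define a where "a = xa \<omega>"
    define p where "p = xb \<omega>"
    have eM: "e \<in> space M - N" using \<omega> measurable_space[OF xi] unfolding e_def by blast
    have pe: "proper_fun (f e)" "geodesically_convex (f e)" using nci eM by auto
    have lip: "\<forall>u v. f e u - f e v \<le> ereal (L e * dist u v)" and L0: "L e \<ge> 0" using good[OF eM] by auto
    define \<psi> where "\<psi> v = real_of_ereal (f e v) + (dist a v)\<^sup>2 / (2*lam)" for v
    have \<phi>\<psi>: "\<phi> \<omega> v = ereal (\<psi> v)" for v
      using lip_fin[OF pe(1) lip, of v] unfolding \<phi>_def \<psi>_def e_def[symmetric] a_def[symmetric]
      by (metis plus_ereal.simps(1))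
    have cont: "continuous_on UNIV \<psi>"
      unfolding \<psi>_def using lam by (intro continuous_intros lip_cont[OF pe(1) lip L0]) auto
    have pmin: "p \<in> argmin_set (\<lambda>v. f e v + ereal ((dist a v)\<^sup>2 / (2*lam)))"
      using xb[OF \<omega>(1)] unfolding prox_def p_def e_def a_def by simp
    have minval: "ereal (\<psi> p) \<le> \<phi> \<omega> v" for v
      using pmin unfolding argmin_set_def \<phi>_def e_def a_def \<phi>\<psi>[symmetric] by auto
    have sc: "ereal (\<psi> p + (dist p v)\<^sup>2 / (2*lam)) \<le> \<phi> \<omega> v" for v
      using strong_conv[OF H pe(2) pe(1) lam pmin, of v] unfolding \<phi>_def \<psi>_def e_def a_def by simp
    show ?thesis
    proof
      assume "xb \<omega> \<in> ball z r"
      hence pr: "dist z p < r" by (simp add: p_def)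
      obtain s where s: "s \<in> \<rat>" "dist z p < s" "s < r" using Rats_dense_in_real[OF pr] by auto
      have s0: "0 < s" using s(2) zero_le_dist[of z p] by linarith
      have "mi \<omega> s = (INF q\<in>D \<inter> ball z s. ereal (\<psi> q))" unfolding mi_def \<phi>\<psi> by simp
      also have "\<dots> \<le> ereal (\<psi> p)" by (rule inf_dense_le[OF cont _ _ D(2)]) (use s in auto)
      also have "\<dots> < ereal (\<psi> p + (s - dist z p)\<^sup>2 / (2*lam))" using s lam by simp
      also have "\<dots> \<le> mo \<omega> s"
        unfolding mo_def
      proof (rule INF_greatest)
        fix q assume q: "q \<in> D \<inter> - cball z s"
        hence "s < dist z q" by simp
        moreover have "dist z q \<le> dist z p + dist p q" by (rule dist_triangle)
        ultimately have "s - dist z p \<le> dist p q" by linarith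
        hence "(s - dist z p)\<^sup>2 \<le> (dist p q)\<^sup>2" using s(2) by (intro power_mono) auto
        hence "(s - dist z p)\<^sup>2 / (2*lam) \<le> (dist p q)\<^sup>2 / (2*lam)" using lam by (intro divide_right_mono) auto
        hence "ereal (\<psi> p + (s - dist z p)\<^sup>2 / (2*lam)) \<le> ereal (\<psi> p + (dist p q)\<^sup>2 / (2*lam))" by simp
        also have "\<dots> \<le> \<phi> \<omega> q" by (rule sc)
        finally show "ereal (\<psi> p + (s - dist z p)\<^sup>2 / (2*lam)) \<le> \<phi> \<omega> q" .
      qed
      finally show "\<exists>s\<in>{s. s \<in> \<rat> \<and> 0 < s \<and> s < r}. mi \<omega> s < mo \<omega> s" using s s0 by auto
    next
      assume "\<exists>s\<in>{s. s \<in> \<rat> \<and> 0 < s \<and> s < r}. mi \<omega> s < mo \<omega> s"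
      then obtain s where s: "0 < s" "s < r" "mi \<omega> s < mo \<omega> s" by auto
      show "xb \<omega> \<in> ball z r"
      proof (rule ccontr)
        assume "xb \<omega> \<notin> ball z r"
        hence ps: "p \<in> - cball z s" using s by (auto simp: p_def)
        have "mo \<omega> s = (INF q\<in>D \<inter> (- cball z s). ereal (\<psi> q))" unfolding mo_def \<phi>\<psi> by simp
        also have "\<dots> \<le> ereal (\<psi> p)" by (rule inf_dense_le[OF cont _ ps D(2)]) auto
        also have "\<dots> \<le> mi \<omega> s" unfolding mi_def by (rule INF_greatest) (rule minval)
        finally show False using s(3) by simp
      qed
    qed
  qed
  have eq: "{\<omega>\<in>space Q. xi \<omega> \<notin> N \<and> xb \<omega> \<in> ball z r}
     = (space Q - (xi -` N \<inter> space Q)) \<inter> (\<Union>s\<in>{s. s \<in> \<rat> \<and> 0 < s \<and> s < r}. {\<omega>\<in>space Q. mi \<omega> s < mo \<omega> s})"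
    using equiv by blast
  have m\<phi>: "(\<lambda>\<omega>. \<phi> \<omega> q) \<in> borel_measurable Q" for q
  proof -
    have "(\<lambda>\<omega>. (xi \<omega>, q)) \<in> Q \<rightarrow>\<^sub>M M \<Otimes>\<^sub>M borel" using xi by measurable
    from measurable_comp[OF this fmeas]
    have [measurable]: "(\<lambda>\<omega>. f (xi \<omega>) q) \<in> borel_measurable Q" by (simp add: comp_def)
    have [measurable]: "(\<lambda>\<omega>. dist (xa \<omega>) q) \<in> borel_measurable Q" by (rule meas_dist_pt[OF xa])
    show ?thesis unfolding \<phi>_def by measurable
  qed
  have cD: "countable (D \<inter> A)" for A using D(1) by auto
  have [measurable]: "(\<lambda>\<omega>. mi \<omega> s) \<in> borel_measurable Q" for s
    unfolding mi_def by (intro borel_measurable_INF cD m\<phi>)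
  have [measurable]: "(\<lambda>\<omega>. mo \<omega> s) \<in> borel_measurable Q" for s
    unfolding mo_def by (intro borel_measurable_INF cD m\<phi>)
  have "(space Q - (xi -` N \<inter> space Q)) \<inter> (\<Union>s\<in>{s. s \<in> \<rat> \<and> 0 < s \<and> s < r}. {\<omega>\<in>space Q. mi \<omega> s < mo \<omega> s}) \<in> sets Q"
  proof (rule sets.Int)
    show "space Q - (xi -` N \<inter> space Q) \<in> sets Q"
      using measurable_sets[OF xi N] by auto
    show "(\<Union>s\<in>{s. s \<in> \<rat> \<and> 0 < s \<and> s < r}. {\<omega>\<in>space Q. mi \<omega> s < mo \<omega> s}) \<in> sets Q"
    proof (rule sets.countable_UN'')
    show "countable {s. s \<in> \<rat> \<and> 0 < s \<and> s < r}" by (rule countable_subset[OF _ countable_rat]) auto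
    fix s show "{\<omega>\<in>space Q. mi \<omega> s < mo \<omega> s} \<in> sets Q" by measurable
    qed
  qed
  thus ?thesis using eq by simp
qed

lemma step_meas:
  fixes Q :: "'w measure" and M :: "'e measure" and f :: "'e \<Rightarrow> 'x::metric_space \<Rightarrow> ereal"
    and D :: "'x set"
  assumes H: "hadamard_space TYPE('x)" and D: "countable D" "closure D = UNIV" and lam: "lam > 0"
    and nci: "\<And>e. e \<in> space M \<Longrightarrow> proper_fun (f e) \<and> geodesically_convex (f e)"
    and fmeas: "(\<lambda>(e, x). f e x) \<in> borel_measurable (M \<Otimes>\<^sub>M borel)"
    and N_sub: "\<And>A. A \<subseteq> N \<Longrightarrow> A \<in> sets M"
    and good: "\<And>e. e \<in> space M - N \<Longrightarrow> (\<forall>u v. f e u - f e v \<le> ereal (L e * dist u v)) \<and> L e \<ge> 0"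
    and xi: "xi \<in> measurable Q M" and xa: "xa \<in> borel_measurable Q"
    and xb: "\<And>\<omega>. \<omega> \<in> space Q \<Longrightarrow> xb \<omega> \<in> prox f lam (xi \<omega>) (xa \<omega>)"
  shows "xb \<in> borel_measurable Q"
proof (rule meas_by_balls[OF D])
  fix z r
  have "xb -` ball z r \<inter> space Q = {\<omega>\<in>space Q. xi \<omega> \<in> N \<and> xb \<omega> \<in> ball z r} \<union> {\<omega>\<in>space Q. xi \<omega> \<notin> N \<and> xb \<omega> \<in> ball z r}"
    by auto
  also have "\<dots> \<in> sets Q"
    using S_part[OF H D lam nci N_sub xi xa xb] T_part[OF H D lam nci fmeas N_sub[OF order_refl] good xi xa xb]
    by auto
  finally show "xb -` ball z r \<inter> space Q \<in> sets Q" .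
qed

lemma filt_gen_sub:
  "(\<Union>i\<in>I. {\<xi> i -` A \<inter> space P | A. A \<in> sets M}) \<subseteq> Pow (space P)"
  by auto

lemma filt_space: "space (nat_filtration P M \<xi> n) = space P"
  unfolding nat_filtration_def by (simp add: filt_gen_sub)

lemma filt_sets: "sets (nat_filtration P M \<xi> n) = sigma_sets (space P) (\<Union>i\<in>{1..n}. {\<xi> i -` A \<inter> space P | A. A \<in> sets M})"
  unfolding nat_filtration_def by (simp add: filt_gen_sub)

lemma filt_meas:
  assumes "\<xi> i \<in> measurable P M" "1 \<le> i" "i \<le> n"
  shows "\<xi> i \<in> measurable (nat_filtration P M \<xi> n) M"
proof (rule measurableI)
  fix x assume "x \<in> space (nat_filtration P M \<xi> n)"
  thus "\<xi> i x \<in> space M" using measurable_space[OF assms(1)] by (simp add: filt_space)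
next
  fix A assume "A \<in> sets M"
  hence "\<xi> i -` A \<inter> space P \<in> (\<Union>i\<in>{1..n}. {\<xi> i -` A \<inter> space P | A. A \<in> sets M})"
    using assms by (intro UN_I[of i]) auto
  thus "\<xi> i -` A \<inter> space (nat_filtration P M \<xi> n) \<in> sets (nat_filtration P M \<xi> n)"
    by (simp add: filt_space filt_sets)
qed

lemma filt_subalg:
  assumes "\<And>i. 1 \<le> i \<Longrightarrow> \<xi> i \<in> measurable P M"
  shows "subalgebra P (nat_filtration P M \<xi> n)"
  unfolding subalgebra_def
proof
  show "space (nat_filtration P M \<xi> n) = space P" by (rule filt_space)
  show "sets (nat_filtration P M \<xi> n) \<subseteq> sets P"
    unfolding filt_sets
  proof (rule sets.sigma_sets_subset)
    show "(\<Union>i\<in>{1..n}. {\<xi> i -` A \<inter> space P | A. A \<in> sets M}) \<subseteq> sets P"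
      using assms measurable_sets by fastforce
  qed
qed

lemma filt_mono:
  assumes "m \<le> n"
  shows "subalgebra (nat_filtration P M \<xi> n) (nat_filtration P M \<xi> m)"
  unfolding subalgebra_def filt_space filt_sets
proof (intro conjI refl sigma_sets_mono' subsetI)
  fix X assume "X \<in> (\<Union>i\<in>{1..m}. {\<xi> i -` A \<inter> space P | A. A \<in> sets M})"
  then obtain i A where "i \<in> {1..m}" "A \<in> sets M" "X = \<xi> i -` A \<inter> space P" by blast
  thus "X \<in> (\<Union>i\<in>{1..n}. {\<xi> i -` A \<inter> space P | A. A \<in> sets M})"
    using assms by (intro UN_I[of i]) auto
qed

lemma ennreal_abs_real_le: "ennreal \<bar>real_of_ereal x\<bar> \<le> e2ennreal x + e2ennreal (- x)"
  by (cases x) (auto simp: abs_if e2ennreal_neg)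

lemma ennreal_abs_real_le': "ennreal (real_of_ereal \<bar>x\<bar>) \<le> e2ennreal x + e2ennreal (- x)"
  by (cases x) (auto simp: abs_if e2ennreal_neg)

lemma f_sec_meas:
  assumes fmeas: "(\<lambda>(e, x). f e x) \<in> borel_measurable (M \<Otimes>\<^sub>M borel)"
  shows "(\<lambda>e. f e z) \<in> borel_measurable M"
proof -
  have "(\<lambda>e. (e, z)) \<in> M \<rightarrow>\<^sub>M M \<Otimes>\<^sub>M borel" by measurable
  from measurable_comp[OF this fmeas] show ?thesis by (simp add: comp_def)
qed

lemma fbar_real:
  fixes M :: "'e measure" and f :: "'e \<Rightarrow> 'x::metric_space \<Rightarrow> ereal"
  assumes P: "prob_space M"
    and fmeas: "(\<lambda>(e, x). f e x) \<in> borel_measurable (M \<Otimes>\<^sub>M borel)"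
    and fbp: "proper_fun (\<lambda>z. ext_integral M (\<lambda>e. f e z))"
    and N: "N \<in> sets M" "emeasure M N = 0"
    and good: "\<And>e. e \<in> space M - N \<Longrightarrow> (\<forall>u v. f e u - f e v \<le> ereal (L e * dist u v)) \<and> proper_fun (f e)"
    and Lint: "integrable M L"
  shows "integrable M (\<lambda>e. real_of_ereal (f e z)) \<and>
         ext_integral M (\<lambda>e. f e z) = ereal (\<integral>e. real_of_ereal (f e z) \<partial>M)"
proof -
  have fm[measurable]: "(\<lambda>e. f e z) \<in> borel_measurable M" for z by (rule f_sec_meas[OF fmeas])
  have AEgood: "AE e in M. e \<notin> N"
    using N by (intro AE_I[of _ _ N]) auto
  obtain z0 where z0: "ext_integral M (\<lambda>e. f e z0) \<noteq> \<infinity>"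
    using fbp unfolding proper_fun_def by blast
  have z0': "ext_integral M (\<lambda>e. f e z0) \<noteq> -\<infinity>"
    using fbp unfolding proper_fun_def by blast
  define P0 where "P0 = (\<integral>\<^sup>+ e. e2ennreal (f e z0) \<partial>M)"
  define N0 where "N0 = (\<integral>\<^sup>+ e. e2ennreal (- f e z0) \<partial>M)"
  have P0: "P0 \<noteq> \<infinity>" using z0 unfolding ext_integral_def P0_def Let_def by (auto split: if_splits)
  have N0: "N0 \<noteq> \<infinity>"
  proof
    assume "N0 = \<infinity>"
    hence "ext_integral M (\<lambda>e. f e z0) = enn2ereal P0 - \<infinity>"
      using P0 unfolding ext_integral_def P0_def[symmetric] N0_def[symmetric] Let_def by simp
    also have "\<dots> = -\<infinity>" using P0 by (cases P0 rule: ennreal_cases) auto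
    finally show False using z0' by simp
  qed
  have int0: "integrable M (\<lambda>e. real_of_ereal (f e z0))"
  proof (rule integrableI_bounded)
    show "(\<lambda>e. real_of_ereal (f e z0)) \<in> borel_measurable M" by measurable
    have "(\<integral>\<^sup>+ e. ennreal (norm (real_of_ereal (f e z0))) \<partial>M) \<le> (\<integral>\<^sup>+ e. e2ennreal (f e z0) + e2ennreal (- f e z0) \<partial>M)"
      by (intro nn_integral_mono) (simp add: ennreal_abs_real_le')
    also have "\<dots> = P0 + N0" unfolding P0_def N0_def by (intro nn_integral_add) measurable
    also have "\<dots> < \<infinity>" using P0 N0 by (simp add: less_top)
    finally show "(\<integral>\<^sup>+ e. ennreal (norm (real_of_ereal (f e z0))) \<partial>M) < \<infinity>" .
  qed
  have fin: "AE e in M. f e z = ereal (real_of_ereal (f e z))"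
    using AEgood
  proof (rule AE_mp, intro AE_I2 impI)
    fix e assume "e \<in> space M" "e \<notin> N"
    hence "e \<in> space M - N" by blast
    from good[OF this] show "f e z = ereal (real_of_ereal (f e z))" using lip_fin by blast
  qed
  have int: "integrable M (\<lambda>e. real_of_ereal (f e z))"
  proof (rule Bochner_Integration.integrable_bound)
    show "integrable M (\<lambda>e. \<bar>real_of_ereal (f e z0)\<bar> + L e * dist z z0)"
      using int0 Lint by (intro Bochner_Integration.integrable_add Bochner_Integration.integrable_abs) auto
    show "(\<lambda>e. real_of_ereal (f e z)) \<in> borel_measurable M" by measurable
    show "AE e in M. norm (real_of_ereal (f e z)) \<le> norm (\<bar>real_of_ereal (f e z0)\<bar> + L e * dist z z0)"
      using AEgood
    proof (rule AE_mp, intro AE_I2 impI)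
      fix e assume "e \<in> space M" "e \<notin> N"
      hence "e \<in> space M - N" by blast
      from good[OF this] have lip: "\<forall>u v. f e u - f e v \<le> ereal (L e * dist u v)" and pr: "proper_fun (f e)" by auto
      have "L e * dist z z0 \<ge> 0"
      proof -
        have "real_of_ereal (f e z) - real_of_ereal (f e z) \<le> L e * dist z z" by (rule lip_real[OF pr lip])
        have "real_of_ereal (f e z) - real_of_ereal (f e z0) \<le> L e * dist z z0" by (rule lip_real[OF pr lip])
        moreover have "real_of_ereal (f e z0) - real_of_ereal (f e z) \<le> L e * dist z0 z" by (rule lip_real[OF pr lip])
        ultimately show ?thesis by (simp add: dist_commute)
      qed
      moreover have "real_of_ereal (f e z) - real_of_ereal (f e z0) \<le> L e * dist z z0" by (rule lip_real[OF pr lip])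
      moreover have "real_of_ereal (f e z0) - real_of_ereal (f e z) \<le> L e * dist z0 z" by (rule lip_real[OF pr lip])
      ultimately have "\<bar>real_of_ereal (f e z)\<bar> \<le> \<bar>real_of_ereal (f e z0)\<bar> + L e * dist z z0"
        by (simp only: dist_commute)
      thus "norm (real_of_ereal (f e z)) \<le> norm (\<bar>real_of_ereal (f e z0)\<bar> + L e * dist z z0)"
        unfolding real_norm_def by linarith
    qed
  qed
  define g where "g e = real_of_ereal (f e z)" for e
  have gm[measurable]: "g \<in> borel_measurable M" unfolding g_def by measurable
  have "AE e in M. e2ennreal (f e z) = ennreal (g e)"
    using fin by (rule eventually_mono) (metis e2ennreal_ereal g_def)
  hence PA: "(\<integral>\<^sup>+ e. e2ennreal (f e z) \<partial>M) = (\<integral>\<^sup>+ e. ennreal (g e) \<partial>M)"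
    by (rule nn_integral_cong_AE)
  have "AE e in M. e2ennreal (- f e z) = ennreal (- g e)"
    using fin by (rule eventually_mono) (metis e2ennreal_ereal g_def uminus_ereal.simps(1))
  hence NA: "(\<integral>\<^sup>+ e. e2ennreal (- f e z) \<partial>M) = (\<integral>\<^sup>+ e. ennreal (- g e) \<partial>M)"
    by (rule nn_integral_cong_AE)
  have bnd: "(\<integral>\<^sup>+ e. ennreal (norm (g e)) \<partial>M) < \<infinity>" using int unfolding g_def integrable_iff_bounded by blast
  have A1: "(\<integral>\<^sup>+ e. ennreal (g e) \<partial>M) < \<infinity>"
    by (rule le_less_trans[OF _ bnd]) (intro nn_integral_mono, simp)
  have A2: "(\<integral>\<^sup>+ e. ennreal (- g e) \<partial>M) < \<infinity>"
    by (rule le_less_trans[OF _ bnd]) (intro nn_integral_mono, simp)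
  have I: "(\<integral>e. g e \<partial>M) = enn2real (\<integral>\<^sup>+ e. ennreal (g e) \<partial>M) - enn2real (\<integral>\<^sup>+ e. ennreal (- g e) \<partial>M)"
    by (rule real_lebesgue_integral_def) (use int in \<open>simp add: g_def\<close>)
  have "ext_integral M (\<lambda>e. f e z) = enn2ereal (\<integral>\<^sup>+ e. ennreal (g e) \<partial>M) - enn2ereal (\<integral>\<^sup>+ e. ennreal (- g e) \<partial>M)"
    unfolding ext_integral_def Let_def PA NA using A1 by simp
  also have "\<dots> = ereal (\<integral>e. g e \<partial>M)"
    unfolding I using A1 A2
    by (cases "\<integral>\<^sup>+ e. ennreal (g e) \<partial>M" rule: ennreal_cases;
        cases "\<integral>\<^sup>+ e. ennreal (- g e) \<partial>M" rule: ennreal_cases) auto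
  finally show ?thesis using int by (simp add: g_def)
qed

lemma cond_le_from_sets:
  fixes P F :: "'w measure" and h R :: "'w \<Rightarrow> real"
  assumes Pfin: "finite_measure P" and sub: "subalgebra P F"
    and hm: "h \<in> borel_measurable P" and h0: "\<And>\<omega>. 0 \<le> h \<omega>"
    and Rm: "R \<in> borel_measurable F"
    and B: "B \<in> sets F" and Rbnd: "\<And>\<omega>. \<omega> \<in> B \<Longrightarrow> \<bar>R \<omega>\<bar> \<le> K"
    and key: "\<And>A. A \<in> sets F \<Longrightarrow> A \<subseteq> B \<Longrightarrow>
       integrable P (\<lambda>\<omega>. indicator A \<omega> * h \<omega>) \<and>
       (\<integral>\<omega>. indicator A \<omega> * h \<omega> \<partial>P) \<le> (\<integral>\<omega>. indicator A \<omega> * R \<omega> \<partial>P)"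
  shows "AE \<omega> in P. \<omega> \<in> B \<longrightarrow> enn2ereal (nn_cond_exp P F (\<lambda>\<omega>. ennreal (h \<omega>)) \<omega>) \<le> ereal (R \<omega>)"
proof -
  interpret finite_measure P by (rule Pfin)
  have sfs: "sigma_finite_subalgebra P F"
    by (rule finite_measure_subalgebra_is_sigma_finite) (simp add: finite_measure_subalgebra_def finite_measure_subalgebra_axioms_def Pfin sub)
  define g where "g = nn_cond_exp P F (\<lambda>\<omega>. ennreal (h \<omega>))"
  have gF: "g \<in> borel_measurable F" unfolding g_def by (rule borel_measurable_nn_cond_exp)
  have gP: "g \<in> borel_measurable P" unfolding g_def by (rule borel_measurable_nn_cond_exp2)
  have RP: "R \<in> borel_measurable P" by (rule measurable_from_subalg[OF sub Rm])
  have spF: "space F = space P" using sub unfolding subalgebra_def by simp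
  have setsF: "A \<in> sets F \<Longrightarrow> A \<in> sets P" for A using sub unfolding subalgebra_def by auto
  have inteq: "(\<integral>\<^sup>+\<omega>. indicator A \<omega> * g \<omega> \<partial>P) = ennreal (\<integral>\<omega>. indicator A \<omega> * h \<omega> \<partial>P)"
    if A: "A \<in> sets F" "A \<subseteq> B" for A
  proof -
    note [measurable] = gP hm RP
    have [measurable]: "A \<in> sets P" by (rule setsF[OF A(1)])
    have "(\<integral>\<^sup>+\<omega>. indicator A \<omega> * g \<omega> \<partial>P) = (\<integral>\<^sup>+\<omega>. indicator A \<omega> * ennreal (h \<omega>) \<partial>P)"
      unfolding g_def
    proof (rule sigma_finite_subalgebra.nn_cond_exp_intg[OF sfs])
      show "indicator A \<in> borel_measurable F" using A(1) by (rule borel_measurable_indicator)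
      show "(\<lambda>\<omega>. ennreal (h \<omega>)) \<in> borel_measurable P" using hm by (rule measurable_compose) simp
    qed
    also have "\<dots> = (\<integral>\<^sup>+\<omega>. ennreal (indicator A \<omega> * h \<omega>) \<partial>P)"
      by (intro nn_integral_cong) (auto simp: indicator_def)
    also have "\<dots> = ennreal (\<integral>\<omega>. indicator A \<omega> * h \<omega> \<partial>P)"
      using key[OF A] h0 by (intro nn_integral_eq_integral) (auto simp: indicator_def)
    finally show ?thesis .
  qed
  have Bsp: "B \<subseteq> space P" using sets.sets_into_space[OF B] spF by simp
  have fin: "AE \<omega> in P. \<omega> \<in> B \<longrightarrow> g \<omega> \<noteq> \<infinity>"
  proof -
    note [measurable] = gP hm RP
    have [measurable]: "B \<in> sets P" by (rule setsF[OF B])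
    have "AE \<omega> in P. indicator B \<omega> * g \<omega> \<noteq> \<infinity>"
      by (rule nn_integral_PInf_AE) (measurable, simp add: inteq[OF B order_refl])
    thus ?thesis by (rule eventually_mono) (auto simp: indicator_def)
  qed
  define C where "C m = {\<omega>\<in>space P. \<omega> \<in> B \<and> ereal (R \<omega>) < enn2ereal (g \<omega>) \<and> g \<omega> \<le> of_nat m}" for m :: nat
  have notC: "AE \<omega> in P. \<omega> \<notin> C m" for m
  proof -
    have CF: "C m \<in> sets F"
    proof -
      note [measurable] = gF Rm B
      have [measurable]: "(\<lambda>\<omega>. enn2ereal (g \<omega>)) \<in> borel_measurable F"
        using measurable_compose[OF gF measurable_enn2ereal] by simp
      have "{\<omega>\<in>space F. \<omega> \<in> B \<and> ereal (R \<omega>) < enn2ereal (g \<omega>) \<and> g \<omega> \<le> of_nat m} \<in> sets F"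
        by measurable
      thus ?thesis unfolding C_def spF .
    qed
    note [measurable] = gP hm RP
    have [measurable]: "C m \<in> sets P" by (rule setsF[OF CF])
    have CB: "C m \<subseteq> B" unfolding C_def by auto
    define gr where "gr \<omega> = enn2real (g \<omega>)" for \<omega>
    have [measurable]: "gr \<in> borel_measurable P" unfolding gr_def by measurable
    have onC: "g \<omega> = ennreal (gr \<omega>) \<and> gr \<omega> \<le> m \<and> R \<omega> < gr \<omega>" if "\<omega> \<in> C m" for \<omega>
    proof -
      have g: "g \<omega> \<le> of_nat m" "ereal (R \<omega>) < enn2ereal (g \<omega>)" using that unfolding C_def by auto
      hence "g \<omega> \<noteq> \<top>" by (auto simp: top_unique)
      then obtain r where r: "0 \<le> r" "g \<omega> = ennreal r" by (cases "g \<omega>" rule: ennreal_cases) auto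
      have "gr \<omega> = r" using r by (simp add: gr_def)
      thus ?thesis using r g by (auto simp: ennreal_of_nat_eq_real_of_nat)
    qed
    have int_gr: "integrable P (\<lambda>\<omega>. indicator (C m) \<omega> * gr \<omega>)"
    proof (rule Bochner_Integration.integrable_bound)
      show "integrable P (\<lambda>\<omega>. real m)" by simp
      show "(\<lambda>\<omega>. indicator (C m) \<omega> * gr \<omega>) \<in> borel_measurable P" by measurable
      show "AE \<omega> in P. norm (indicator (C m) \<omega> * gr \<omega>) \<le> norm (real m)"
        using onC by (intro AE_I2) (auto simp: indicator_def gr_def)
    qed
    have int_R: "integrable P (\<lambda>\<omega>. indicator (C m) \<omega> * R \<omega>)"
    proof (rule Bochner_Integration.integrable_bound)
      show "integrable P (\<lambda>\<omega>. K)" by simp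
      show "(\<lambda>\<omega>. indicator (C m) \<omega> * R \<omega>) \<in> borel_measurable P" by measurable
      show "AE \<omega> in P. norm (indicator (C m) \<omega> * R \<omega>) \<le> norm K"
        using Rbnd CB by (intro AE_I2) (force simp: indicator_def)
    qed
    have "ennreal (\<integral>\<omega>. indicator (C m) \<omega> * gr \<omega> \<partial>P) = (\<integral>\<^sup>+\<omega>. ennreal (indicator (C m) \<omega> * gr \<omega>) \<partial>P)"
      using int_gr by (intro nn_integral_eq_integral[symmetric]) (auto simp: indicator_def gr_def)
    also have "\<dots> = (\<integral>\<^sup>+\<omega>. indicator (C m) \<omega> * g \<omega> \<partial>P)"
      using onC by (intro nn_integral_cong) (auto simp: indicator_def)
    also have "\<dots> = ennreal (\<integral>\<omega>. indicator (C m) \<omega> * h \<omega> \<partial>P)" by (rule inteq[OF CF CB])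
    finally have "ennreal (\<integral>\<omega>. indicator (C m) \<omega> * gr \<omega> \<partial>P) = ennreal (\<integral>\<omega>. indicator (C m) \<omega> * h \<omega> \<partial>P)" .
    moreover have "0 \<le> (\<integral>\<omega>. indicator (C m) \<omega> * gr \<omega> \<partial>P)" by (intro Bochner_Integration.integral_nonneg) (auto simp: gr_def)
    moreover have "0 \<le> (\<integral>\<omega>. indicator (C m) \<omega> * h \<omega> \<partial>P)" using h0 by (intro Bochner_Integration.integral_nonneg) auto
    ultimately have eqi: "(\<integral>\<omega>. indicator (C m) \<omega> * gr \<omega> \<partial>P) = (\<integral>\<omega>. indicator (C m) \<omega> * h \<omega> \<partial>P)"
      by simp
    define d where "d \<omega> = indicator (C m) \<omega> * (gr \<omega> - R \<omega>)" for \<omega>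
    have int_d: "integrable P d" unfolding d_def right_diff_distrib
      using int_gr int_R by (rule Bochner_Integration.integrable_diff)
    have d0: "0 \<le> d \<omega>" for \<omega> using onC[of \<omega>] by (auto simp: d_def indicator_def)
    have "(\<integral>\<omega>. d \<omega> \<partial>P) = (\<integral>\<omega>. indicator (C m) \<omega> * gr \<omega> \<partial>P) - (\<integral>\<omega>. indicator (C m) \<omega> * R \<omega> \<partial>P)"
      unfolding d_def right_diff_distrib by (rule Bochner_Integration.integral_diff[OF int_gr int_R])
    also have "\<dots> \<le> 0" using key[OF CF CB] eqi by simp
    finally have "(\<integral>\<omega>. d \<omega> \<partial>P) = 0" using Bochner_Integration.integral_nonneg[of P d] d0 by (simp add: antisym)
    hence "AE \<omega> in P. d \<omega> = 0" using integral_nonneg_eq_0_iff_AE[OF int_d] d0 by simp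
    thus ?thesis
    proof (rule eventually_mono)
      fix \<omega> assume "d \<omega> = 0"
      thus "\<omega> \<notin> C m" using onC[of \<omega>] by (auto simp: d_def)
    qed
  qed
  have "AE \<omega> in P. \<forall>m. \<omega> \<notin> C m" using notC by (simp add: AE_all_countable)
  with fin show ?thesis
  proof (eventually_elim)
    case (elim \<omega>)
    show ?case
    proof
      assume \<omega>B: "\<omega> \<in> B"
      hence gfin: "g \<omega> \<noteq> \<infinity>" using elim by simp
      then obtain r where r: "0 \<le> r" "g \<omega> = ennreal r" by (cases "g \<omega>" rule: ennreal_cases) auto
      obtain m :: nat where m: "r \<le> real m" using real_arch_simple by blast
      have "g \<omega> \<le> of_nat m" using r m by (simp add: ennreal_of_nat_eq_real_of_nat)
      moreover have "\<omega> \<in> space P" using \<omega>B Bsp by auto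
      ultimately have "\<not> ereal (R \<omega>) < enn2ereal (g \<omega>)" using elim \<omega>B unfolding C_def by blast
      thus "enn2ereal (nn_cond_exp P F (\<lambda>\<omega>. ennreal (h \<omega>)) \<omega>) \<le> ereal (R \<omega>)"
        unfolding g_def[symmetric] by simp
    qed
  qed
qed

lemma indep_set_mono2:
  assumes "prob_space P" "prob_space.indep_set P A B" "C \<subseteq> B"
  shows "prob_space.indep_set P A C"
proof -
  interpret prob_space P by fact
  show ?thesis using assms(2) unfolding indep_set_def
    by (rule indep_sets_mono_sets) (use assms(3) in \<open>auto split: bool.split\<close>)
qed

lemma freeze:
  fixes P F :: "'w measure" and M :: "'e measure" and \<Phi> :: "'e \<Rightarrow> 'x::metric_space \<Rightarrow> 'x \<Rightarrow> real"
    and \<Psi> :: "'x \<Rightarrow> 'x \<Rightarrow> real" and G :: "'e \<Rightarrow> real" and D :: "'x set"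
  assumes Pp: "prob_space P" and Mp: "prob_space M" and sub: "subalgebra P F"
    and D: "countable D" "closure D = UNIV"
    and xi: "xi \<in> measurable P M" and dxi: "distr P M xi = M"
    and indep: "prob_space.indep_set P (sigma_sets (space P) {xi -` A \<inter> space P | A. A \<in> sets M}) (sets F)"
    and a: "a \<in> borel_measurable F" and b: "b \<in> borel_measurable F"
    and \<Phi>m: "(\<lambda>(e, uv). \<Phi> e (fst uv) (snd uv)) \<in> borel_measurable (M \<Otimes>\<^sub>M (borel \<Otimes>\<^sub>M borel))"
    and \<Psi>m: "(\<lambda>uv. \<Psi> (fst uv) (snd uv)) \<in> borel_measurable (borel \<Otimes>\<^sub>M borel)"
    and \<Phi>int: "\<And>u v. integrable M (\<lambda>e. \<Phi> e u v) \<and> (\<integral>e. \<Phi> e u v \<partial>M) = \<Psi> u v"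
    and N: "N \<in> null_sets M"
    and bound: "\<And>e u v. e \<in> space M - N \<Longrightarrow> dist u v \<le> k \<Longrightarrow> \<bar>\<Phi> e u v\<bar> \<le> G e"
    and Gint: "integrable M G"
    and A: "A \<in> sets F" "A \<subseteq> {\<omega>. dist (a \<omega>) (b \<omega>) \<le> k}"
  shows "integrable P (\<lambda>\<omega>. indicator A \<omega> * \<Phi> (xi \<omega>) (a \<omega>) (b \<omega>)) \<and>
         (\<integral>\<omega>. indicator A \<omega> * \<Phi> (xi \<omega>) (a \<omega>) (b \<omega>) \<partial>P) = (\<integral>\<omega>. indicator A \<omega> * \<Psi> (a \<omega>) (b \<omega>) \<partial>P)"
proof -
  interpret P: prob_space P by (rule Pp)
  interpret M: prob_space M by (rule Mp)
  define Vm where "Vm = (borel :: real measure) \<Otimes>\<^sub>M ((borel :: 'x measure) \<Otimes>\<^sub>M (borel :: 'x measure))"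
  define V where "V \<omega> = (indicator A \<omega> :: real, a \<omega>, b \<omega>)" for \<omega>
  have VF: "V \<in> measurable F Vm"
    unfolding V_def Vm_def using a b A(1) by measurable
  have VP: "V \<in> measurable P Vm" by (rule measurable_from_subalg[OF sub VF])
  have spF: "space F = space P" using sub unfolding subalgebra_def by simp
  define \<nu> where "\<nu> = distr P Vm V"
  interpret \<nu>: prob_space \<nu> unfolding \<nu>_def by (rule P.prob_space_distr[OF VP])
  interpret PS: pair_sigma_finite M \<nu>
    by (simp add: pair_sigma_finite_def prob_space_imp_sigma_finite Mp \<nu>.prob_space_axioms)
  have jm0: "(\<lambda>\<omega>. (xi \<omega>, V \<omega>)) \<in> measurable P (M \<Otimes>\<^sub>M Vm)" using xi VP by measurable
  have joint: "M \<Otimes>\<^sub>M \<nu> = distr P (M \<Otimes>\<^sub>M Vm) (\<lambda>\<omega>. (xi \<omega>, V \<omega>))"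
  proof (rule pair_measure_eqI)
    show "sigma_finite_measure M" "sigma_finite_measure \<nu>"
      by (simp_all add: prob_space_imp_sigma_finite Mp \<nu>.prob_space_axioms)
    show "sets (M \<Otimes>\<^sub>M \<nu>) = sets (distr P (M \<Otimes>\<^sub>M Vm) (\<lambda>\<omega>. (xi \<omega>, V \<omega>)))"
      by (simp add: \<nu>_def cong: sets_pair_measure_cong)
    fix X Y assume X: "X \<in> sets M" and Y: "Y \<in> sets \<nu>"
    have Y': "Y \<in> sets Vm" using Y by (simp add: \<nu>_def)
    define a1 where "a1 = xi -` X \<inter> space P"
    define b1 where "b1 = V -` Y \<inter> space P"
    have a1: "a1 \<in> sigma_sets (space P) {xi -` A \<inter> space P | A. A \<in> sets M}"
      unfolding a1_def using X by (intro sigma_sets.Basic) blast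
    have b1: "b1 \<in> sets F" unfolding b1_def using measurable_sets[OF VF Y'] spF by simp
    have pr: "P.prob (a1 \<inter> b1) = P.prob a1 * P.prob b1"
      using indep a1 b1 unfolding P.indep_sets2_eq by blast
    have "emeasure M X = emeasure P a1"
      using X unfolding a1_def by (subst dxi[symmetric], subst emeasure_distr[OF xi]) auto
    moreover have "emeasure \<nu> Y = emeasure P b1"
      unfolding \<nu>_def b1_def by (rule emeasure_distr[OF VP Y'])
    moreover have "emeasure (distr P (M \<Otimes>\<^sub>M Vm) (\<lambda>\<omega>. (xi \<omega>, V \<omega>))) (X \<times> Y) = emeasure P (a1 \<inter> b1)"
    proof -
      have "(\<lambda>\<omega>. (xi \<omega>, V \<omega>)) -` (X \<times> Y) \<inter> space P = a1 \<inter> b1"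
        unfolding a1_def b1_def by auto
      thus ?thesis using X Y' by (subst emeasure_distr[OF jm0]) auto
    qed
    ultimately show "emeasure M X * emeasure \<nu> Y = emeasure (distr P (M \<Otimes>\<^sub>M Vm) (\<lambda>\<omega>. (xi \<omega>, V \<omega>))) (X \<times> Y)"
      using pr by (simp add: P.emeasure_eq_measure ennreal_mult'')
  qed
  have jm: "(\<lambda>\<omega>. (xi \<omega>, V \<omega>)) \<in> measurable P (M \<Otimes>\<^sub>M Vm)" using xi VP by measurable
  define cut where "cut u v c = (if dist u v \<le> k then c else 0)" for u v :: 'x and c :: real
  define \<Phi>k where "\<Phi>k = (\<lambda>(e, w::real \<times> 'x \<times> 'x). fst w * cut (fst (snd w)) (snd (snd w)) (\<Phi> e (fst (snd w)) (snd (snd w))))"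
  define \<Psi>k where "\<Psi>k = (\<lambda>w::real \<times> 'x \<times> 'x. fst w * cut (fst (snd w)) (snd (snd w)) (\<Psi> (fst (snd w)) (snd (snd w))))"
  have distm: "(\<lambda>w. dist (fst (snd w)) (snd (snd w))) \<in> borel_measurable Q"
    if "(\<lambda>w. fst (snd w)) \<in> borel_measurable Q" "(\<lambda>w. snd (snd w)) \<in> borel_measurable Q"
    for Q :: "('c \<times> 'x \<times> 'x) measure"
    by (rule meas_dist[OF D that])
  have \<Phi>km: "\<Phi>k \<in> borel_measurable (M \<Otimes>\<^sub>M Vm)"
  proof -
    have m1: "(\<lambda>(e, w). \<Phi> e (fst (snd w)) (snd (snd w))) \<in> borel_measurable (M \<Otimes>\<^sub>M Vm)"
    proof -
      have "(\<lambda>(e, w). (e, snd w)) \<in> measurable (M \<Otimes>\<^sub>M Vm) (M \<Otimes>\<^sub>M (borel \<Otimes>\<^sub>M borel))"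
        unfolding Vm_def by measurable
      from measurable_comp[OF this \<Phi>m] show ?thesis by (simp add: comp_def case_prod_beta)
    qed
    have m2: "(\<lambda>ew. dist (fst (snd (snd ew))) (snd (snd (snd ew)))) \<in> borel_measurable (M \<Otimes>\<^sub>M Vm)"
    proof -
      have "(\<lambda>ew. snd ew) \<in> measurable (M \<Otimes>\<^sub>M Vm) Vm" by measurable
      moreover have "(\<lambda>w. dist (fst (snd w)) (snd (snd w))) \<in> borel_measurable Vm"
        by (rule distm) (simp_all add: Vm_def)
      ultimately show ?thesis by (rule measurable_compose)
    qed
    have m3: "(\<lambda>ew. fst (snd ew)) \<in> borel_measurable (M \<Otimes>\<^sub>M Vm)" unfolding Vm_def by measurable
    have eq: "\<Phi>k = (\<lambda>ew. fst (snd ew) * (if dist (fst (snd (snd ew))) (snd (snd (snd ew))) \<le> k then (\<lambda>(e, w). \<Phi> e (fst (snd w)) (snd (snd w))) ew else 0))"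
      unfolding \<Phi>k_def cut_def by (auto simp: fun_eq_iff)
    show ?thesis unfolding eq using m1 m2 m3 by measurable
  qed
  have \<Psi>km: "\<Psi>k \<in> borel_measurable Vm"
  proof -
    have m1: "(\<lambda>w. \<Psi> (fst (snd w)) (snd (snd w))) \<in> borel_measurable Vm"
    proof -
      have "(\<lambda>w. snd w) \<in> measurable Vm (borel \<Otimes>\<^sub>M borel)" unfolding Vm_def by measurable
      from measurable_comp[OF this \<Psi>m] show ?thesis by (simp add: comp_def)
    qed
    have m2: "(\<lambda>w. dist (fst (snd w)) (snd (snd w))) \<in> borel_measurable Vm"
      by (rule distm) (simp_all add: Vm_def)
    have m3: "(\<lambda>w. fst w) \<in> borel_measurable Vm" unfolding Vm_def by measurable
    have eq: "\<Psi>k = (\<lambda>w. fst w * (if dist (fst (snd w)) (snd (snd w)) \<le> k then \<Psi> (fst (snd w)) (snd (snd w)) else 0))"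
      unfolding \<Psi>k_def cut_def by (auto simp: fun_eq_iff)
    show ?thesis unfolding eq using m1 m2 m3 by measurable
  qed
  have lhs_eq: "\<Phi>k (xi \<omega>, V \<omega>) = indicator A \<omega> * \<Phi> (xi \<omega>) (a \<omega>) (b \<omega>)" for \<omega>
    using A(2) by (auto simp: \<Phi>k_def V_def cut_def indicator_def)
  have rhs_eq: "\<Psi>k (V \<omega>) = indicator A \<omega> * \<Psi> (a \<omega>) (b \<omega>)" for \<omega>
    using A(2) by (auto simp: \<Psi>k_def V_def cut_def indicator_def)
  have Gm: "G \<in> borel_measurable M" using Gint by auto
  have GP: "integrable P (\<lambda>\<omega>. G (xi \<omega>))"
    using integrable_distr_eq[OF xi Gm] Gint dxi by simp
  have AEN: "AE \<omega> in P. xi \<omega> \<notin> N"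
  proof -
    have "emeasure P (xi -` N \<inter> space P) = emeasure (distr P M xi) N"
      by (rule emeasure_distr[OF xi, symmetric]) (use N in auto)
    also have "\<dots> = 0" using N dxi by (simp add: null_setsD1)
    finally show ?thesis using N measurable_sets[OF xi, of N]
      by (intro AE_I[of _ _ "xi -` N \<inter> space P"]) auto
  qed
  have intP: "integrable P (\<lambda>\<omega>. \<Phi>k (xi \<omega>, V \<omega>))"
  proof (rule Bochner_Integration.integrable_bound[OF GP])
    show "(\<lambda>\<omega>. \<Phi>k (xi \<omega>, V \<omega>)) \<in> borel_measurable P"
      using measurable_compose[OF jm \<Phi>km] by simp
    show "AE \<omega> in P. norm (\<Phi>k (xi \<omega>, V \<omega>)) \<le> norm (G (xi \<omega>))"
      using AEN
    proof (rule eventually_mono)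
      fix \<omega> assume \<omega>: "xi \<omega> \<notin> N"
      show "norm (\<Phi>k (xi \<omega>, V \<omega>)) \<le> norm (G (xi \<omega>))"
      proof (cases "\<omega> \<in> A \<and> \<omega> \<in> space P")
        case True
        hence "xi \<omega> \<in> space M - N" using \<omega> measurable_space[OF xi] by auto
        moreover have "dist (a \<omega>) (b \<omega>) \<le> k" using True A(2) by auto
        ultimately have "\<bar>\<Phi> (xi \<omega>) (a \<omega>) (b \<omega>)\<bar> \<le> G (xi \<omega>)" by (rule bound)
        thus ?thesis unfolding lhs_eq using True by auto
      next
        case False
        show ?thesis
        proof (cases "\<omega> \<in> A")
          case True
          hence "\<omega> \<in> space P" using sets.sets_into_space[OF A(1)] spF by auto
          with True False show ?thesis by simp
        next
          case False2: False
          show ?thesis unfolding lhs_eq using False2 by simp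
        qed
      qed
    qed
  qed
  have intPS: "integrable (M \<Otimes>\<^sub>M \<nu>) \<Phi>k"
    unfolding joint using integrable_distr_eq[OF jm \<Phi>km] intP by simp
  have "(\<integral>\<omega>. \<Phi>k (xi \<omega>, V \<omega>) \<partial>P) = (\<integral>ew. \<Phi>k ew \<partial>(M \<Otimes>\<^sub>M \<nu>))"
    unfolding joint by (rule integral_distr[OF jm \<Phi>km, symmetric])
  also have "\<dots> = (\<integral>w. (\<integral>e. \<Phi>k (e, w) \<partial>M) \<partial>\<nu>)"
    using PS.integral_snd[of "\<lambda>e w. \<Phi>k (e, w)"] intPS by simp
  also have "\<dots> = (\<integral>w. \<Psi>k w \<partial>\<nu>)"
  proof (rule Bochner_Integration.integral_cong[OF refl])
    fix w :: "real \<times> 'x \<times> 'x"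
    obtain t u v where w: "w = (t, u, v)" by (cases w) auto
    show "(\<integral>e. \<Phi>k (e, w) \<partial>M) = \<Psi>k w"
      using \<Phi>int[of u v] by (auto simp: w \<Phi>k_def \<Psi>k_def cut_def)
  qed
  also have "\<dots> = (\<integral>\<omega>. \<Psi>k (V \<omega>) \<partial>P)" unfolding \<nu>_def by (rule integral_distr[OF VP \<Psi>km])
  finally show ?thesis using intP unfolding lhs_eq rhs_eq by simp
qed

lemma indep_filt:
  fixes P :: "'w measure" and M :: "'e measure"
  assumes Pp: "prob_space P" and ind: "prob_space.indep_vars P (\<lambda>_. M) \<xi> {1..}"
  shows "prob_space.indep_set P (sigma_sets (space P) {\<xi> (Suc n) -` A \<inter> space P | A. A \<in> sets M})
           (sets (nat_filtration P M \<xi> n))"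
proof -
  interpret prob_space P by (rule Pp)
  define E where "E i = {\<xi> i -` A \<inter> space P | A. A \<in> sets M}" for i
  define I where "I b = (if b then {Suc n} else {1..n})" for b
  have i1: "indep_sets E {1..}" using ind unfolding indep_vars_def2 E_def by blast
  have "indep_sets E (\<Union>j\<in>UNIV. I j)"
    by (rule indep_sets_mono_index[OF _ i1]) (auto simp: I_def)
  hence "indep_sets (\<lambda>j. sigma_sets (space P) (\<Union>i\<in>I j. E i)) UNIV"
  proof (rule indep_sets_collect_sigma)
    fix i j show "Int_stable (E i)"
      unfolding Int_stable_def E_def
    proof (intro ballI)
      fix a b assume "a \<in> {\<xi> i -` A \<inter> space P | A. A \<in> sets M}" "b \<in> {\<xi> i -` A \<inter> space P | A. A \<in> sets M}"
      then obtain A B where "A \<in> sets M" "B \<in> sets M" "a = \<xi> i -` A \<inter> space P" "b = \<xi> i -` B \<inter> space P" by blast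
      thus "a \<inter> b \<in> {\<xi> i -` A \<inter> space P | A. A \<in> sets M}"
        by (intro CollectI exI[of _ "A \<inter> B"]) auto
    qed
  next
    show "disjoint_family_on I UNIV" unfolding disjoint_family_on_def I_def by auto
  qed
  moreover have "(\<lambda>j. sigma_sets (space P) (\<Union>i\<in>I j. E i)) =
     case_bool (sigma_sets (space P) {\<xi> (Suc n) -` A \<inter> space P | A. A \<in> sets M}) (sets (nat_filtration P M \<xi> n))"
    by (rule ext, simp split: bool.split add: I_def E_def filt_sets)
  ultimately show ?thesis unfolding indep_set_def by simp
qed

lemma abs3: fixes a b c A B :: real
  shows "0 \<le> a \<Longrightarrow> a \<le> A \<Longrightarrow> \<bar>b\<bar> \<le> B \<Longrightarrow> 0 \<le> c \<Longrightarrow> \<bar>a - b + c\<bar> \<le> A + B + c"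
  by (simp add: abs_le_iff)

lemma AE_preimage_null:
  assumes xi: "xi \<in> measurable P M" and dxi: "distr P M xi = M" and N: "N \<in> null_sets M"
  shows "AE \<omega> in P. xi \<omega> \<notin> N"
proof -
  have "emeasure P (xi -` N \<inter> space P) = emeasure (distr P M xi) N"
    by (rule emeasure_distr[OF xi, symmetric]) (use N in auto)
  also have "\<dots> = 0" using N dxi by (simp add: null_setsD1)
  finally show ?thesis using N measurable_sets[OF xi, of N]
    by (intro AE_I[of _ _ "xi -` N \<inter> space P"]) auto
qed

theorem lemma5p3:
  fixes M :: "'e measure" and P :: "'w measure"
    and f :: "'e \<Rightarrow> 'x::metric_space \<Rightarrow> ereal"
    and x0 :: 'x and lam :: "nat \<Rightarrow> real"
    and \<xi> :: "nat \<Rightarrow> 'w \<Rightarrow> 'e" and x :: "nat \<Rightarrow> 'w \<Rightarrow> 'x"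
    and L :: "'e \<Rightarrow> real"
  assumes M_prob: "prob_space M" and M_complete: "complete_measure M"
    and P_prob: "prob_space P"
    and X_hadamard: "hadamard_space TYPE('x)" and X_separable: "separable_space TYPE('x)"
    and f_nci: "normal_convex_integrand M f"
    and fbar_proper: "proper_fun (\<lambda>z. ext_integral M (\<lambda>e. f e z))"
    and fbar_argmin: "argmin_set (\<lambda>z. ext_integral M (\<lambda>e. f e z)) \<noteq> {}"
    and lam_pos: "\<And>n. lam n > 0"
    and lam_sum: "\<not> summable lam"
    and lam_sq_sum: "summable (\<lambda>n. (lam n)\<^sup>2)"
    and \<xi>_indep: "prob_space.indep_vars P (\<lambda>_. M) \<xi> {1..}"
    and \<xi>_distr: "\<And>i. i \<ge> 1 \<Longrightarrow> \<xi> i \<in> measurable P M \<and> distr P M (\<xi> i) = M"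
    and x_0: "\<And>\<omega>. x 0 \<omega> = x0"
    and x_Suc: "\<And>n \<omega>. x (Suc n) \<omega> \<in> prox f (lam n) (\<xi> (Suc n) \<omega>) (x n \<omega>)"
    and L_meas: "L \<in> borel_measurable M"
    and L_pos: "\<And>e. e \<in> space M \<Longrightarrow> L e > 0"
    and L_sq_int: "integrable M (\<lambda>e. (L e)\<^sup>2)"
    and L_lip: "AE e in M. \<forall>u v. f e u - f e v \<le> ereal (L e * dist u v)"
  shows "\<forall>n (y :: 'w \<Rightarrow> 'x).
           y \<in> measurable (nat_filtration P M \<xi> n) borel \<longrightarrow>
           (AE \<omega> in P.
              enn2ereal (nn_cond_exp P (nat_filtration P M \<xi> n)
                           (\<lambda>\<omega>'. ennreal ((dist (x (Suc n) \<omega>') (y \<omega>'))\<^sup>2)) \<omega>)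
              \<le> ereal ((dist (x n \<omega>) (y \<omega>))\<^sup>2)
                 - ereal (2 * lam n) * (ext_integral M (\<lambda>e. f e (x n \<omega>)) - ext_integral M (\<lambda>e. f e (y \<omega>)))
                 + ereal (4 * (lam n)\<^sup>2 * (\<integral>e. (L e)\<^sup>2 \<partial>M))) \<and>
           ((AE \<omega> in P. y \<omega> \<in> argmin_set (\<lambda>z. ext_integral M (\<lambda>e. f e z))) \<longrightarrow>
            (AE \<omega> in P.
              enn2ereal (nn_cond_exp P (nat_filtration P M \<xi> n)
                           (\<lambda>\<omega>'. ennreal ((dist (x (Suc n) \<omega>') (y \<omega>'))\<^sup>2)) \<omega>)
              \<le> ereal ((dist (x n \<omega>) (y \<omega>))\<^sup>2)
                 - ereal (2 * lam n) * (ext_integral M (\<lambda>e. f e (x n \<omega>))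
                                         - (INF z. ext_integral M (\<lambda>e. f e z)))
                 + ereal (4 * (lam n)\<^sup>2 * (\<integral>e. (L e)\<^sup>2 \<partial>M))))"
proof (intro allI impI)
  fix n and y :: "'w \<Rightarrow> 'x"
  assume ym: "y \<in> measurable (nat_filtration P M \<xi> n) borel"
  interpret Pp: prob_space P by (rule P_prob)
  interpret Mp: prob_space M by (rule M_prob)
  obtain D :: "'x set" where D: "countable D" "closure D = UNIV"
    using X_separable unfolding separable_space_def by blast
  have fmeas: "(\<lambda>(e, x). f e x) \<in> borel_measurable (M \<Otimes>\<^sub>M borel)"
    using f_nci unfolding normal_convex_integrand_def by blast
  have nci: "\<And>e. e \<in> space M \<Longrightarrow> proper_fun (f e) \<and> geodesically_convex (f e)"
    using f_nci unfolding normal_convex_integrand_def by blast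
  obtain N where N: "{e \<in> space M. \<not> (\<forall>u v. f e u - f e v \<le> ereal (L e * dist u v))} \<subseteq> N"
      "emeasure M N = 0" "N \<in> sets M"
    using L_lip by (elim AE_E) blast
  have Nnull: "N \<in> null_sets M" using N by (simp add: null_sets_def)
  have N_sub: "\<And>A. A \<subseteq> N \<Longrightarrow> A \<in> sets M"
    using complete_measure.complete[OF M_complete _ Nnull] by blast
  have good: "\<And>e. e \<in> space M - N \<Longrightarrow> (\<forall>u v. f e u - f e v \<le> ereal (L e * dist u v)) \<and> L e \<ge> 0"
    using N(1) L_pos by (auto simp: less_imp_le)
  have good2: "\<And>e. e \<in> space M - N \<Longrightarrow> (\<forall>u v. f e u - f e v \<le> ereal (L e * dist u v)) \<and> proper_fun (f e)"
    using good nci by blast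
  have Lint: "integrable M L"
  proof (rule Bochner_Integration.integrable_bound)
    show "integrable M (\<lambda>e. 1 + (L e)\<^sup>2)" using L_sq_int by simp
    show "L \<in> borel_measurable M" by (rule L_meas)
    show "AE e in M. norm (L e) \<le> norm (1 + (L e)\<^sup>2)"
    proof (intro AE_I2)
      fix e
      have e1: "(\<bar>L e\<bar> - 1)\<^sup>2 = (L e)\<^sup>2 - 2 * \<bar>L e\<bar> + 1"
        by (simp add: power2_diff)
      have "0 \<le> (\<bar>L e\<bar> - 1)\<^sup>2" by simp
      hence "\<bar>L e\<bar> \<le> 1 + (L e)\<^sup>2" using e1 by (smt (verit) zero_le_power2)
      thus "norm (L e) \<le> norm (1 + (L e)\<^sup>2)" by simp
    qed
  qed
  have fb: "integrable M (\<lambda>e. real_of_ereal (f e z)) \<and>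
         ext_integral M (\<lambda>e. f e z) = ereal (\<integral>e. real_of_ereal (f e z) \<partial>M)" for z
    by (rule fbar_real[OF M_prob fmeas fbar_proper N(3) N(2) good2 Lint])
  define Fb where "Fb z = (\<integral>e. real_of_ereal (f e z) \<partial>M)" for z
  define Lbar where "Lbar = (\<integral>e. (L e)\<^sup>2 \<partial>M)"
  define L1 where "L1 = (\<integral>e. L e \<partial>M)"
  have fbeq: "ext_integral M (\<lambda>e. f e z) = ereal (Fb z)" for z using fb[of z] by (simp add: Fb_def)
  have fbint: "integrable M (\<lambda>e. real_of_ereal (f e z))" for z using fb[of z] by simp
  have AEgood: "AE e in M. e \<notin> N" using N by (intro AE_I[of _ _ N]) auto
  have L1pos: "L1 \<ge> 0" unfolding L1_def using L_pos by (intro Bochner_Integration.integral_nonneg) (auto simp: less_imp_le)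
  have Lbarpos: "Lbar \<ge> 0" unfolding Lbar_def by (intro Bochner_Integration.integral_nonneg) auto
  have Fblip: "Fb u - Fb v \<le> L1 * dist u v" for u v
  proof -
    have "Fb u - Fb v = (\<integral>e. real_of_ereal (f e u) - real_of_ereal (f e v) \<partial>M)"
      unfolding Fb_def by (rule Bochner_Integration.integral_diff[OF fbint fbint, symmetric])
    also have "\<dots> \<le> (\<integral>e. L e * dist u v \<partial>M)"
    proof (rule integral_mono_AE)
      show "integrable M (\<lambda>e. real_of_ereal (f e u) - real_of_ereal (f e v))"
        by (rule Bochner_Integration.integrable_diff[OF fbint fbint])
      show "integrable M (\<lambda>e. L e * dist u v)" using Lint by simp
      show "AE e in M. real_of_ereal (f e u) - real_of_ereal (f e v) \<le> L e * dist u v"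
        using AEgood
      proof (rule AE_mp, intro AE_I2 impI)
        fix e assume "e \<in> space M" "e \<notin> N"
        hence "e \<in> space M - N" by blast
        from good2[OF this] show "real_of_ereal (f e u) - real_of_ereal (f e v) \<le> L e * dist u v"
          using lip_real by blast
      qed
    qed
    also have "\<dots> = L1 * dist u v" unfolding L1_def by simp
    finally show ?thesis .
  qed
  have Fbabs: "\<bar>Fb u - Fb v\<bar> \<le> L1 * dist u v" for u v
    using Fblip[of u v] Fblip[of v u] by (simp add: dist_commute abs_le_iff)
  have Fbcont: "continuous_on UNIV Fb"
  proof (rule lipschitz_on_continuous_on)
    show "L1-lipschitz_on UNIV Fb" unfolding lipschitz_on_def
      using L1pos Fbabs by (auto simp: dist_real_def)
  qed
  have Fbm: "Fb \<in> borel_measurable borel" by (rule borel_measurable_continuous_onI[OF Fbcont])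
  define Fn where "Fn k = nat_filtration P M \<xi> k" for k
  have \<xi>m: "\<And>i. 1 \<le> i \<Longrightarrow> \<xi> i \<in> measurable P M" using \<xi>_distr by blast
  have xm: "x k \<in> borel_measurable (Fn k)" for k
  proof (induction k)
    case 0
    have "x 0 = (\<lambda>\<omega>. x0)" using x_0 by (simp add: fun_eq_iff)
    thus ?case by simp
  next
    case (Suc k)
    have a: "x k \<in> borel_measurable (Fn (Suc k))"
      using measurable_from_subalg[OF filt_mono[of k "Suc k"] Suc[unfolded Fn_def]] by (simp add: Fn_def)
    have xi: "\<xi> (Suc k) \<in> measurable (Fn (Suc k)) M"
      unfolding Fn_def by (rule filt_meas) (auto intro: \<xi>m)
    show ?case
      by (rule step_meas[OF X_hadamard D lam_pos nci fmeas N_sub good xi a])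
         (use x_Suc in auto)
  qed
  define F where "F = Fn n"
  have subF: "subalgebra P F" unfolding F_def Fn_def by (rule filt_subalg[OF \<xi>m])
  have spF: "space F = space P" using subF unfolding subalgebra_def by simp
  have indF: "Pp.indep_set (sigma_sets (space P) {\<xi> (Suc n) -` A \<inter> space P | A. A \<in> sets M}) (sets F)"
    unfolding F_def Fn_def by (rule indep_filt[OF P_prob \<xi>_indep])
  have aF: "x n \<in> borel_measurable F" using xm[of n] by (simp add: F_def)
  have bF: "y \<in> borel_measurable F" using ym by (simp add: F_def Fn_def)
  have cP: "x (Suc n) \<in> borel_measurable P"
    using measurable_from_subalg[OF filt_subalg[OF \<xi>m] xm[of "Suc n", unfolded Fn_def]] .
  have bP: "y \<in> borel_measurable P" by (rule measurable_from_subalg[OF subF bF])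
  define \<Phi> where "\<Phi> e u v = (dist u v)\<^sup>2 - 2 * lam n * (real_of_ereal (f e u) - real_of_ereal (f e v)) + 4 * (lam n)\<^sup>2 * (L e)\<^sup>2"
    for e and u v :: 'x
  define \<Psi> where "\<Psi> u v = (dist u v)\<^sup>2 - 2 * lam n * (Fb u - Fb v) + 4 * (lam n)\<^sup>2 * Lbar" for u v :: 'x
  define R where "R \<omega> = \<Psi> (x n \<omega>) (y \<omega>)" for \<omega>
  have xiS: "\<xi> (Suc n) \<in> measurable P M" by (rule \<xi>m) simp
  have dxi: "distr P M (\<xi> (Suc n)) = M" using \<xi>_distr[of "Suc n"] by simp
  have dFm: "(\<lambda>\<omega>. dist (x n \<omega>) (y \<omega>)) \<in> borel_measurable F" by (rule meas_dist[OF D aF bF])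
  have hm: "(\<lambda>\<omega>. (dist (x (Suc n) \<omega>) (y \<omega>))\<^sup>2) \<in> borel_measurable P"
    using meas_dist[OF D cP bP] by measurable
  have \<Psi>m: "(\<lambda>uv. \<Psi> (fst uv) (snd uv)) \<in> borel_measurable (borel \<Otimes>\<^sub>M borel)"
  proof -
    have [measurable]: "(\<lambda>uv::'x\<times>'x. dist (fst uv) (snd uv)) \<in> borel_measurable (borel \<Otimes>\<^sub>M borel)"
      by (rule meas_dist[OF D]) simp_all
    have [measurable]: "(\<lambda>uv::'x\<times>'x. Fb (fst uv)) \<in> borel_measurable (borel \<Otimes>\<^sub>M borel)"
      by (rule measurable_compose[OF _ Fbm]) simp
    have [measurable]: "(\<lambda>uv::'x\<times>'x. Fb (snd uv)) \<in> borel_measurable (borel \<Otimes>\<^sub>M borel)"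
      by (rule measurable_compose[OF _ Fbm]) simp
    show ?thesis unfolding \<Psi>_def by measurable
  qed
  have Rm: "R \<in> borel_measurable F"
  proof -
    have "(\<lambda>\<omega>. (x n \<omega>, y \<omega>)) \<in> measurable F (borel \<Otimes>\<^sub>M borel)" using aF bF by measurable
    from measurable_comp[OF this \<Psi>m] show ?thesis by (simp add: comp_def R_def[abs_def])
  qed
  have \<Phi>m: "(\<lambda>(e, uv). \<Phi> e (fst uv) (snd uv)) \<in> borel_measurable (M \<Otimes>\<^sub>M (borel \<Otimes>\<^sub>M borel))"
  proof -
    have c1: "(\<lambda>(e, uv). (e, fst uv)) \<in> measurable (M \<Otimes>\<^sub>M ((borel::'x measure) \<Otimes>\<^sub>M (borel::'x measure))) (M \<Otimes>\<^sub>M borel)"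
      by measurable
    have c2: "(\<lambda>(e, uv). (e, snd uv)) \<in> measurable (M \<Otimes>\<^sub>M ((borel::'x measure) \<Otimes>\<^sub>M (borel::'x measure))) (M \<Otimes>\<^sub>M borel)"
      by measurable
    have [measurable]: "(\<lambda>euv. f (fst euv) (fst (snd euv))) \<in> borel_measurable (M \<Otimes>\<^sub>M ((borel::'x measure) \<Otimes>\<^sub>M (borel::'x measure)))"
      using measurable_comp[OF c1 fmeas] by (simp add: comp_def case_prod_beta)
    have [measurable]: "(\<lambda>euv. f (fst euv) (snd (snd euv))) \<in> borel_measurable (M \<Otimes>\<^sub>M ((borel::'x measure) \<Otimes>\<^sub>M (borel::'x measure)))"
      using measurable_comp[OF c2 fmeas] by (simp add: comp_def case_prod_beta)
    have [measurable]: "(\<lambda>euv. dist (fst (snd euv)) (snd (snd euv))) \<in> borel_measurable (M \<Otimes>\<^sub>M ((borel::'x measure) \<Otimes>\<^sub>M (borel::'x measure)))"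
      by (rule meas_dist[OF D]) simp_all
    have [measurable]: "L \<in> borel_measurable M" by (rule L_meas)
    have "(\<lambda>euv. \<Phi> (fst euv) (fst (snd euv)) (snd (snd euv))) \<in> borel_measurable (M \<Otimes>\<^sub>M ((borel::'x measure) \<Otimes>\<^sub>M (borel::'x measure)))"
      unfolding \<Phi>_def by measurable
    thus ?thesis by (simp add: case_prod_beta)
  qed
  have \<Phi>int: "integrable M (\<lambda>e. \<Phi> e u v) \<and> (\<integral>e. \<Phi> e u v \<partial>M) = \<Psi> u v" for u v
  proof -
    have i1: "integrable M (\<lambda>e. real_of_ereal (f e u) - real_of_ereal (f e v))"
      by (rule Bochner_Integration.integrable_diff[OF fbint fbint])
    have i2: "integrable M (\<lambda>e. 2 * lam n * (real_of_ereal (f e u) - real_of_ereal (f e v)))"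
      using i1 by simp
    have i3: "integrable M (\<lambda>e. 4 * (lam n)\<^sup>2 * (L e)\<^sup>2)" using L_sq_int by simp
    have i4: "integrable M (\<lambda>e. (dist u v)\<^sup>2)" by simp
    have i5: "integrable M (\<lambda>e. (dist u v)\<^sup>2 - 2 * lam n * (real_of_ereal (f e u) - real_of_ereal (f e v)))"
      using i4 i2 by (rule Bochner_Integration.integrable_diff)
    have int: "integrable M (\<lambda>e. \<Phi> e u v)" unfolding \<Phi>_def
      using i5 i3 by (rule Bochner_Integration.integrable_add)
    have "(\<integral>e. \<Phi> e u v \<partial>M) = (\<integral>e. (dist u v)\<^sup>2 - 2 * lam n * (real_of_ereal (f e u) - real_of_ereal (f e v)) \<partial>M) + (\<integral>e. 4 * (lam n)\<^sup>2 * (L e)\<^sup>2 \<partial>M)"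
      unfolding \<Phi>_def by (rule Bochner_Integration.integral_add[OF i5 i3])
    also have "(\<integral>e. (dist u v)\<^sup>2 - 2 * lam n * (real_of_ereal (f e u) - real_of_ereal (f e v)) \<partial>M) = (dist u v)\<^sup>2 - (\<integral>e. 2 * lam n * (real_of_ereal (f e u) - real_of_ereal (f e v)) \<partial>M)"
      by (subst Bochner_Integration.integral_diff[OF i4 i2]) (simp add: Mp.prob_space)
    also have "(\<integral>e. 2 * lam n * (real_of_ereal (f e u) - real_of_ereal (f e v)) \<partial>M) = 2 * lam n * (Fb u - Fb v)"
      unfolding Fb_def by (simp add: Bochner_Integration.integral_diff[OF fbint fbint])
    also have "(\<integral>e. 4 * (lam n)\<^sup>2 * (L e)\<^sup>2 \<partial>M) = 4 * (lam n)\<^sup>2 * Lbar" unfolding Lbar_def by simp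
    finally show ?thesis using int by (simp add: \<Psi>_def)
  qed
  have main_k: "AE \<omega> in P. \<omega> \<in> {\<omega>\<in>space P. dist (x n \<omega>) (y \<omega>) \<le> real k} \<longrightarrow>
       enn2ereal (nn_cond_exp P F (\<lambda>\<omega>'. ennreal ((dist (x (Suc n) \<omega>') (y \<omega>'))\<^sup>2)) \<omega>) \<le> ereal (R \<omega>)" for k :: nat
  proof -
    define B where "B = {\<omega>\<in>space P. dist (x n \<omega>) (y \<omega>) \<le> real k}"
    define G where "G e = (real k)\<^sup>2 + 2 * lam n * real k * L e + 4 * (lam n)\<^sup>2 * (L e)\<^sup>2" for e
    define K where "K = (real k)\<^sup>2 + 2 * lam n * real k * L1 + 4 * (lam n)\<^sup>2 * Lbar"
    have lamn: "lam n > 0" by (rule lam_pos)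
    have Gint: "integrable M G"
      unfolding G_def using Lint L_sq_int
      by (intro Bochner_Integration.integrable_add) auto
    have bound: "\<bar>\<Phi> e u v\<bar> \<le> G e" if e: "e \<in> space M - N" and d: "dist u v \<le> real k" for e u v
    proof -
      from good2[OF e] have lip: "\<forall>u v. f e u - f e v \<le> ereal (L e * dist u v)" and pr: "proper_fun (f e)" by auto
      have L0: "L e \<ge> 0" using good[OF e] by simp
      have l1: "real_of_ereal (f e u) - real_of_ereal (f e v) \<le> L e * dist u v" by (rule lip_real[OF pr lip])
      have l2: "real_of_ereal (f e v) - real_of_ereal (f e u) \<le> L e * dist v u" by (rule lip_real[OF pr lip])
      have "\<bar>real_of_ereal (f e u) - real_of_ereal (f e v)\<bar> \<le> L e * dist u v"
        using l1 l2 by (simp add: dist_commute abs_le_iff)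
      also have "\<dots> \<le> L e * real k" using d L0 by (rule mult_left_mono)
      finally have fa: "\<bar>real_of_ereal (f e u) - real_of_ereal (f e v)\<bar> \<le> L e * real k" .
      have "2 * lam n * \<bar>real_of_ereal (f e u) - real_of_ereal (f e v)\<bar> \<le> 2 * lam n * (L e * real k)"
        using fa lamn by (intro mult_left_mono) auto
      moreover have "(dist u v)\<^sup>2 \<le> (real k)\<^sup>2" using d by (intro power_mono) auto
      moreover have "\<bar>2 * lam n * (real_of_ereal (f e u) - real_of_ereal (f e v))\<bar> = 2 * lam n * \<bar>real_of_ereal (f e u) - real_of_ereal (f e v)\<bar>"
        using lamn by (simp add: abs_mult)
      moreover have "0 \<le> 4 * (lam n)\<^sup>2 * (L e)\<^sup>2" by simp
      ultimately have "\<bar>\<Phi> e u v\<bar> \<le> (real k)\<^sup>2 + 2 * lam n * (L e * real k) + 4 * (lam n)\<^sup>2 * (L e)\<^sup>2"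
        unfolding \<Phi>_def by (intro abs3) auto
      also have "\<dots> = G e" by (simp add: G_def algebra_simps)
      finally show ?thesis .
    qed
    have BF: "B \<in> sets F"
    proof -
      have [measurable]: "(\<lambda>\<omega>. dist (x n \<omega>) (y \<omega>)) \<in> borel_measurable F" by (rule dFm)
      have "{\<omega>\<in>space F. dist (x n \<omega>) (y \<omega>) \<le> real k} \<in> sets F" by measurable
      thus ?thesis unfolding B_def spF .
    qed
    have Rbnd: "\<bar>R \<omega>\<bar> \<le> K" if "\<omega> \<in> B" for \<omega>
    proof -
      have d: "dist (x n \<omega>) (y \<omega>) \<le> real k" using that by (simp add: B_def)
      have "\<bar>Fb (x n \<omega>) - Fb (y \<omega>)\<bar> \<le> L1 * real k"
        using Fbabs[of "x n \<omega>" "y \<omega>"] mult_left_mono[OF d L1pos] by linarith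
      hence "2 * lam n * \<bar>Fb (x n \<omega>) - Fb (y \<omega>)\<bar> \<le> 2 * lam n * (L1 * real k)"
        using lamn by (intro mult_left_mono) auto
      moreover have "(dist (x n \<omega>) (y \<omega>))\<^sup>2 \<le> (real k)\<^sup>2" using d by (intro power_mono) auto
      moreover have "\<bar>2 * lam n * (Fb (x n \<omega>) - Fb (y \<omega>))\<bar> = 2 * lam n * \<bar>Fb (x n \<omega>) - Fb (y \<omega>)\<bar>"
        using lamn by (simp add: abs_mult)
      moreover have "0 \<le> 4 * (lam n)\<^sup>2 * Lbar" using Lbarpos by simp
      ultimately have "\<bar>R \<omega>\<bar> \<le> (real k)\<^sup>2 + 2 * lam n * (L1 * real k) + 4 * (lam n)\<^sup>2 * Lbar"
        unfolding R_def \<Psi>_def by (intro abs3) auto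
      also have "\<dots> = K" by (simp add: K_def algebra_simps)
      finally show ?thesis .
    qed
    have AEN: "AE \<omega> in P. \<xi> (Suc n) \<omega> \<notin> N" by (rule AE_preimage_null[OF xiS dxi Nnull])
    have ptw: "AE \<omega> in P. (dist (x (Suc n) \<omega>) (y \<omega>))\<^sup>2 \<le> \<Phi> (\<xi> (Suc n) \<omega>) (x n \<omega>) (y \<omega>)"
      using AEN
    proof (rule AE_mp, intro AE_I2 impI)
      fix \<omega> assume \<omega>: "\<omega> \<in> space P" "\<xi> (Suc n) \<omega> \<notin> N"
      define e where "e = \<xi> (Suc n) \<omega>"
      have e: "e \<in> space M - N" using \<omega> measurable_space[OF xiS] unfolding e_def by blast
      from good2[OF e] have lip: "\<forall>u v. f e u - f e v \<le> ereal (L e * dist u v)" and pr: "proper_fun (f e)" by auto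
      have cvx: "geodesically_convex (f e)" using nci e by blast
      have pmin: "x (Suc n) \<omega> \<in> argmin_set (\<lambda>v. f e v + ereal ((dist (x n \<omega>) v)\<^sup>2 / (2 * lam n)))"
        using x_Suc[of n \<omega>] unfolding prox_def e_def .
      show "(dist (x (Suc n) \<omega>) (y \<omega>))\<^sup>2 \<le> \<Phi> (\<xi> (Suc n) \<omega>) (x n \<omega>) (y \<omega>)"
        using good_pointwise[OF X_hadamard cvx pr lamn pmin lip, of "y \<omega>"]
        unfolding \<Phi>_def e_def[symmetric] .
    qed
    have key: "integrable P (\<lambda>\<omega>. indicator A \<omega> * (dist (x (Suc n) \<omega>) (y \<omega>))\<^sup>2) \<and>
       (\<integral>\<omega>. indicator A \<omega> * (dist (x (Suc n) \<omega>) (y \<omega>))\<^sup>2 \<partial>P) \<le> (\<integral>\<omega>. indicator A \<omega> * R \<omega> \<partial>P)"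
      if A: "A \<in> sets F" "A \<subseteq> B" for A
    proof -
      have A': "A \<subseteq> {\<omega>. dist (x n \<omega>) (y \<omega>) \<le> real k}" using A(2) by (auto simp: B_def)
      have fr: "integrable P (\<lambda>\<omega>. indicator A \<omega> * \<Phi> (\<xi> (Suc n) \<omega>) (x n \<omega>) (y \<omega>)) \<and>
         (\<integral>\<omega>. indicator A \<omega> * \<Phi> (\<xi> (Suc n) \<omega>) (x n \<omega>) (y \<omega>) \<partial>P) = (\<integral>\<omega>. indicator A \<omega> * \<Psi> (x n \<omega>) (y \<omega>) \<partial>P)"
        by (rule freeze[OF P_prob M_prob subF D xiS dxi indF aF bF \<Phi>m \<Psi>m \<Phi>int Nnull bound Gint A(1) A'])
      have AP: "A \<in> sets P" using A(1) subF unfolding subalgebra_def by auto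
      have le: "AE \<omega> in P. indicator A \<omega> * (dist (x (Suc n) \<omega>) (y \<omega>))\<^sup>2 \<le> indicator A \<omega> * \<Phi> (\<xi> (Suc n) \<omega>) (x n \<omega>) (y \<omega>)"
        using ptw by (rule eventually_mono) (auto simp: indicator_def)
      have int: "integrable P (\<lambda>\<omega>. indicator A \<omega> * (dist (x (Suc n) \<omega>) (y \<omega>))\<^sup>2)"
      proof (rule Bochner_Integration.integrable_bound)
        show "integrable P (\<lambda>\<omega>. indicator A \<omega> * \<Phi> (\<xi> (Suc n) \<omega>) (x n \<omega>) (y \<omega>))" using fr by blast
        show "(\<lambda>\<omega>. indicator A \<omega> * (dist (x (Suc n) \<omega>) (y \<omega>))\<^sup>2) \<in> borel_measurable P"
          using hm AP by measurable
        show "AE \<omega> in P. norm (indicator A \<omega> * (dist (x (Suc n) \<omega>) (y \<omega>))\<^sup>2) \<le> norm (indicator A \<omega> * \<Phi> (\<xi> (Suc n) \<omega>) (x n \<omega>) (y \<omega>))"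
          using le by (rule eventually_mono) (auto simp: indicator_def)
      qed
      have "(\<integral>\<omega>. indicator A \<omega> * (dist (x (Suc n) \<omega>) (y \<omega>))\<^sup>2 \<partial>P) \<le> (\<integral>\<omega>. indicator A \<omega> * \<Phi> (\<xi> (Suc n) \<omega>) (x n \<omega>) (y \<omega>) \<partial>P)"
        using int fr le by (intro integral_mono_AE) auto
      also have "\<dots> = (\<integral>\<omega>. indicator A \<omega> * R \<omega> \<partial>P)" using fr by (simp add: R_def)
      finally show ?thesis using int by blast
    qed
    show ?thesis
      using cond_le_from_sets[OF Pp.finite_measure_axioms subF hm _ Rm BF Rbnd key]
      unfolding B_def by simp
  qed
  have main: "AE \<omega> in P. enn2ereal (nn_cond_exp P F (\<lambda>\<omega>'. ennreal ((dist (x (Suc n) \<omega>') (y \<omega>'))\<^sup>2)) \<omega>) \<le> ereal (R \<omega>)"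
  proof -
    have "AE \<omega> in P. \<forall>k::nat. \<omega> \<in> {\<omega>\<in>space P. dist (x n \<omega>) (y \<omega>) \<le> real k} \<longrightarrow>
       enn2ereal (nn_cond_exp P F (\<lambda>\<omega>'. ennreal ((dist (x (Suc n) \<omega>') (y \<omega>'))\<^sup>2)) \<omega>) \<le> ereal (R \<omega>)"
      unfolding AE_all_countable using main_k by blast
    thus ?thesis
    proof (rule AE_mp, intro AE_I2 impI)
      fix \<omega> assume \<omega>: "\<omega> \<in> space P" and
        all: "\<forall>k::nat. \<omega> \<in> {\<omega>\<in>space P. dist (x n \<omega>) (y \<omega>) \<le> real k} \<longrightarrow>
       enn2ereal (nn_cond_exp P F (\<lambda>\<omega>'. ennreal ((dist (x (Suc n) \<omega>') (y \<omega>'))\<^sup>2)) \<omega>) \<le> ereal (R \<omega>)"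
      obtain k :: nat where "dist (x n \<omega>) (y \<omega>) \<le> real k" using real_arch_simple by blast
      thus "enn2ereal (nn_cond_exp P F (\<lambda>\<omega>'. ennreal ((dist (x (Suc n) \<omega>') (y \<omega>'))\<^sup>2)) \<omega>) \<le> ereal (R \<omega>)"
        using all \<omega> by blast
    qed
  qed
  have rhs: "ereal ((dist (x n \<omega>) (y \<omega>))\<^sup>2)
                 - ereal (2 * lam n) * (ext_integral M (\<lambda>e. f e (x n \<omega>)) - ext_integral M (\<lambda>e. f e (y \<omega>)))
                 + ereal (4 * (lam n)\<^sup>2 * (\<integral>e. (L e)\<^sup>2 \<partial>M)) = ereal (R \<omega>)" for \<omega>
    by (simp add: fbeq R_def \<Psi>_def Lbar_def)
  have part1: "AE \<omega> in P.
              enn2ereal (nn_cond_exp P (nat_filtration P M \<xi> n)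
                           (\<lambda>\<omega>'. ennreal ((dist (x (Suc n) \<omega>') (y \<omega>'))\<^sup>2)) \<omega>)
              \<le> ereal ((dist (x n \<omega>) (y \<omega>))\<^sup>2)
                 - ereal (2 * lam n) * (ext_integral M (\<lambda>e. f e (x n \<omega>)) - ext_integral M (\<lambda>e. f e (y \<omega>)))
                 + ereal (4 * (lam n)\<^sup>2 * (\<integral>e. (L e)\<^sup>2 \<partial>M))"
    using main unfolding rhs F_def Fn_def .
  have part2: "(AE \<omega> in P. y \<omega> \<in> argmin_set (\<lambda>z. ext_integral M (\<lambda>e. f e z))) \<longrightarrow>
            (AE \<omega> in P.
              enn2ereal (nn_cond_exp P (nat_filtration P M \<xi> n)
                           (\<lambda>\<omega>'. ennreal ((dist (x (Suc n) \<omega>') (y \<omega>'))\<^sup>2)) \<omega>)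
              \<le> ereal ((dist (x n \<omega>) (y \<omega>))\<^sup>2)
                 - ereal (2 * lam n) * (ext_integral M (\<lambda>e. f e (x n \<omega>))
                                         - (INF z. ext_integral M (\<lambda>e. f e z)))
                 + ereal (4 * (lam n)\<^sup>2 * (\<integral>e. (L e)\<^sup>2 \<partial>M)))"
  proof
    assume "AE \<omega> in P. y \<omega> \<in> argmin_set (\<lambda>z. ext_integral M (\<lambda>e. f e z))"
    with part1 show "AE \<omega> in P.
              enn2ereal (nn_cond_exp P (nat_filtration P M \<xi> n)
                           (\<lambda>\<omega>'. ennreal ((dist (x (Suc n) \<omega>') (y \<omega>'))\<^sup>2)) \<omega>)
              \<le> ereal ((dist (x n \<omega>) (y \<omega>))\<^sup>2)
                 - ereal (2 * lam n) * (ext_integral M (\<lambda>e. f e (x n \<omega>))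
                                         - (INF z. ext_integral M (\<lambda>e. f e z)))
                 + ereal (4 * (lam n)\<^sup>2 * (\<integral>e. (L e)\<^sup>2 \<partial>M))"
    proof eventually_elim
      case (elim \<omega>)
      have "(INF z. ext_integral M (\<lambda>e. f e z)) = ext_integral M (\<lambda>e. f e (y \<omega>))"
        using elim(2) unfolding argmin_set_def by (intro antisym INF_lower INF_greatest) auto
      thus ?case using elim(1) by simp
    qed
  qed
  show "(AE \<omega> in P.
              enn2ereal (nn_cond_exp P (nat_filtration P M \<xi> n)
                           (\<lambda>\<omega>'. ennreal ((dist (x (Suc n) \<omega>') (y \<omega>'))\<^sup>2)) \<omega>)
              \<le> ereal ((dist (x n \<omega>) (y \<omega>))\<^sup>2)
                 - ereal (2 * lam n) * (ext_integral M (\<lambda>e. f e (x n \<omega>)) - ext_integral M (\<lambda>e. f e (y \<omega>)))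
                 + ereal (4 * (lam n)\<^sup>2 * (\<integral>e. (L e)\<^sup>2 \<partial>M))) \<and>
           ((AE \<omega> in P. y \<omega> \<in> argmin_set (\<lambda>z. ext_integral M (\<lambda>e. f e z))) \<longrightarrow>
            (AE \<omega> in P.
              enn2ereal (nn_cond_exp P (nat_filtration P M \<xi> n)
                           (\<lambda>\<omega>'. ennreal ((dist (x (Suc n) \<omega>') (y \<omega>'))\<^sup>2)) \<omega>)
              \<le> ereal ((dist (x n \<omega>) (y \<omega>))\<^sup>2)
                 - ereal (2 * lam n) * (ext_integral M (\<lambda>e. f e (x n \<omega>))
                                         - (INF z. ext_integral M (\<lambda>e. f e z)))
                 + ereal (4 * (lam n)\<^sup>2 * (\<integral>e. (L e)\<^sup>2 \<partial>M))))" using part1 part2 by blast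
qed

end
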